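(* Let $G$ be a graph with $n$ nodes, GSO $\mathbf{\Delta}\in\mathbb{R}^{n\times n}$ and GWM $\boldsymbol{A}=n\mathbf{\Delta}$. Let $h:\mathbb{R}\to\mathbb{R}$ be continuous with $h(0)=0$. Then $h(T_{W_{\boldsymbol{A}}})=T_{W_{nh(\mathbf{\Delta})}}$ as operators on $L^2[0,1]$.
   Context: A graph with graph shift operator (GSO) is a triple $G=(V,E,\mathbf{\Delta})$ with $V=\{1,\dots,n\}$ and $\mathbf{\Delta}\in\mathbb{R}^{n\times n}$ symmetric; its graph weight matrix (GWM) is $\boldsymbol{A}=n\mathbf{\Delta}$. For a continuous $h:\mathbb{R}\to\mathbb{R}$ and a symmetric matrix or bounded self-adjoint operator $T$, $h(T)$ is defined by continuous functional calculus (for $\mathbf{\Delta}$ with orthonormal eigenpairs $(\lambda_j,\phi_j)$: $h(\mathbf{\Delta})\mathbf{x}=\sum_j h(\lambda_j)\langle\mathbf{x},\phi_j\rangle\phi_j$; for a compact self-adjoint operator with an orthonormal eigenbasis $(\phi_j)$, including kernel vectors, $h(T)\psi=\sum_j h(\lambda_j)\langle\psi,\phi_j\rangle\phi_j$). For $n\in\mathbb{N}$ let $P_k=[(k-1)/n,k/n)$, $k=1,\dots,n$. For $\boldsymbol{B}\in\mathbb{R}^{n\times n}$ the induced graphon is $W_{\boldsymbol{B}}(u,v)=\sum_{i,j}\boldsymbol{B}_{ij}\chi_{P_i}(u)\chi_{P_j}(v)$; thus $W_{nh(\mathbf{\Delta})}$ is the graphon induced by the matrix $nh(\mathbf{\Delta})$.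 For a bounded symmetric measurable $W:[0,1]^2\to\mathbb{R}$, $T_W\psi(v)=\int_0^1W(v,u)\psi(u)\,du$ on $L^2[0,1]$. *)

theory Defs
  imports "HOL-Analysis.Analysis"
begin

text \<open>Matrices of size n are represented as functions nat => nat => real, only the
  entries with indices < n being relevant (index k corresponds to node k+1).\<close>

definition mat_orth_eigenbasis ::
  "nat \<Rightarrow> (nat \<Rightarrow> nat \<Rightarrow> real) \<Rightarrow> (nat \<Rightarrow> real) \<Rightarrow> (nat \<Rightarrow> nat \<Rightarrow> real) \<Rightarrow> bool" where
  "mat_orth_eigenbasis n D lam phi \<longleftrightarrow>
     (\<forall>j<n. \<forall>k<n. (\<Sum>i<n. phi j i * phi k i) = (if j = k then 1 else 0)) \<and>
     (\<forall>j<n. \<forall>i<n. (\<Sum>k<n. D i k * phi j k) = lam j * phi j i)"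

definition mat_fun :: "(real \<Rightarrow> real) \<Rightarrow> nat \<Rightarrow> (nat \<Rightarrow> nat \<Rightarrow> real) \<Rightarrow> nat \<Rightarrow> nat \<Rightarrow> real" where
  "mat_fun h n D =
     (let (lam, phi) = (SOME (lam, phi). mat_orth_eigenbasis n D lam phi)
      in (\<lambda>i k. \<Sum>j<n. h (lam j) * phi j i * phi j k))"

text \<open>Partition intervals P_{k+1} = [k/n, (k+1)/n) and induced step graphon.\<close>
definition part_int :: "nat \<Rightarrow> nat \<Rightarrow> real set" where
  "part_int n k = {real k / real n ..< real (Suc k) / real n}"

definition induced_graphon :: "nat \<Rightarrow> (nat \<Rightarrow> nat \<Rightarrow> real) \<Rightarrow> real \<Rightarrow> real \<Rightarrow> real" where
  "induced_graphon n B u v =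
     (\<Sum>i<n. \<Sum>j<n. B i j * indicator (part_int n i) u * indicator (part_int n j) v)"

text \<open>L^2[0,1], represented by real functions (equality understood almost everywhere).\<close>
definition L2 :: "(real \<Rightarrow> real) set" where
  "L2 = {f. f \<in> borel_measurable (lebesgue_on {0..1}) \<and>
            integrable (lebesgue_on {0..1}) (\<lambda>x. (f x)\<^sup>2)}"

definition l2_inner :: "(real \<Rightarrow> real) \<Rightarrow> (real \<Rightarrow> real) \<Rightarrow> real" where
  "l2_inner f g = (LINT x | lebesgue_on {0..1}. f x * g x)"

definition l2_norm :: "(real \<Rightarrow> real) \<Rightarrow> real" where
  "l2_norm f = sqrt (l2_inner f f)"

definition integral_op :: "(real \<Rightarrow> real \<Rightarrow> real) \<Rightarrow> (real \<Rightarrow> real) \<Rightarrow> real \<Rightarrow> real" where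
  "integral_op W psi v = (LINT u | lebesgue_on {0..1}. W v u * psi u)"

definition op_orth_eigenbasis ::
  "((real \<Rightarrow> real) \<Rightarrow> real \<Rightarrow> real) \<Rightarrow> (nat \<Rightarrow> real) \<Rightarrow> (nat \<Rightarrow> real \<Rightarrow> real) \<Rightarrow> bool" where
  "op_orth_eigenbasis T lam phi \<longleftrightarrow>
     (\<forall>j. phi j \<in> L2) \<and>
     (\<forall>j k. l2_inner (phi j) (phi k) = (if j = k then 1 else 0)) \<and>
     (\<forall>f\<in>L2. (\<lambda>N. l2_norm (\<lambda>x. f x - (\<Sum>j<N. l2_inner f (phi j) * phi j x))) \<longlonglongrightarrow> 0) \<and>
     (\<forall>j. l2_norm (\<lambda>x. T (phi j) x - lam j * phi j x) = 0)"

definition op_fun :: "(real \<Rightarrow> real) \<Rightarrow> ((real \<Rightarrow> real) \<Rightarrow> real \<Rightarrow> real) \<Rightarrow> (real \<Rightarrow> real) \<Rightarrow> real \<Rightarrow> real" where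
  "op_fun h T psi =
     (let (lam, phi) = (SOME (lam, phi). op_orth_eigenbasis T lam phi)
      in (SOME g. g \<in> L2 \<and>
           (\<lambda>N. l2_norm (\<lambda>x. g x - (\<Sum>j<N. h (lam j) * l2_inner psi (phi j) * phi j x)))
             \<longlonglongrightarrow> 0))"

end

theory Submission
  imports Defs
begin

definition dotn :: "nat \<Rightarrow> (nat \<Rightarrow> real) \<Rightarrow> (nat \<Rightarrow> real) \<Rightarrow> real" where
  "dotn n x y = (\<Sum>i<n. x i * y i)"

definition mulv :: "nat \<Rightarrow> (nat \<Rightarrow> nat \<Rightarrow> real) \<Rightarrow> (nat \<Rightarrow> real) \<Rightarrow> nat \<Rightarrow> real" where
  "mulv n A x = (\<lambda>i. \<Sum>k<n. A i k * x k)"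

lemma dotn_comm: "dotn n x y = dotn n y x"
  by (simp add: dotn_def mult.commute)

lemma dotn_nonneg: "dotn n x x \<ge> 0"
  by (simp add: dotn_def sum_nonneg)

lemma dotn_sum_left:
  "dotn n (\<lambda>i. \<Sum>j\<in>I. a j * v j i) w = (\<Sum>j\<in>I. a j * dotn n (v j) w)"
proof -
  have "dotn n (\<lambda>i. \<Sum>j\<in>I. a j * v j i) w = (\<Sum>i<n. \<Sum>j\<in>I. a j * v j i * w i)"
    by (simp add: dotn_def sum_distrib_right)
  also have "\<dots> = (\<Sum>j\<in>I. \<Sum>i<n. a j * v j i * w i)" by (rule sum.swap)
  also have "\<dots> = (\<Sum>j\<in>I. a j * dotn n (v j) w)"
    by (simp add: dotn_def sum_distrib_left mult.assoc)
  finally show ?thesis .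
qed

lemma dotn_sum_right:
  "dotn n w (\<lambda>i. \<Sum>j\<in>I. a j * v j i) = (\<Sum>j\<in>I. a j * dotn n w (v j))"
  using dotn_sum_left[of n a v I w] by (simp add: dotn_comm)

lemma dotn_diff_left: "dotn n (\<lambda>i. x i - y i) w = dotn n x w - dotn n y w"
  by (simp add: dotn_def left_diff_distrib sum_subtractf)

lemma dotn_diff_right: "dotn n w (\<lambda>i. x i - y i) = dotn n w x - dotn n w y"
  by (simp add: dotn_def right_diff_distrib sum_subtractf)

lemma dotn_add_left: "dotn n (\<lambda>i. x i + y i) w = dotn n x w + dotn n y w"
  by (simp add: dotn_def distrib_right sum.distrib)

lemma dotn_add_right: "dotn n w (\<lambda>i. x i + y i) = dotn n w x + dotn n w y"
  by (simp add: dotn_def distrib_left sum.distrib)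

lemma dotn_scale_left: "dotn n (\<lambda>i. c * x i) w = c * dotn n x w"
  by (simp add: dotn_def sum_distrib_left mult.assoc)

lemma dotn_scale_right: "dotn n w (\<lambda>i. c * x i) = c * dotn n w x"
  by (simp add: dotn_def sum_distrib_left mult.left_commute)

lemma dotn_zero_iff: "dotn n x x = 0 \<longleftrightarrow> (\<forall>i<n. x i = 0)"
  by (auto simp: dotn_def sum_nonneg_eq_0_iff)

definition orthon :: "nat \<Rightarrow> 'a set \<Rightarrow> ('a \<Rightarrow> nat \<Rightarrow> real) \<Rightarrow> bool" where
  "orthon n I v \<longleftrightarrow> (\<forall>j\<in>I. \<forall>k\<in>I. dotn n (v j) (v k) = (if j = k then 1 else 0))"

lemma bessel_identity:
  assumes "finite I" "orthon n I v"
  shows "dotn n (\<lambda>i. x i - (\<Sum>j\<in>I. dotn n x (v j) * v j i)) (\<lambda>i. x i - (\<Sum>j\<in>I. dotn n x (v j) * v j i))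
         = dotn n x x - (\<Sum>j\<in>I. (dotn n x (v j))\<^sup>2)"
proof -
  define a where "a j = dotn n x (v j)" for j
  have 1: "(\<Sum>j\<in>I. a j * dotn n (v j) (v k)) = a k" if "k \<in> I" for k
  proof -
    have "(\<Sum>j\<in>I. a j * dotn n (v j) (v k)) = (\<Sum>j\<in>I. if j = k then a k else 0)"
      using assms(2) that by (intro sum.cong) (auto simp: orthon_def)
    also have "\<dots> = a k" using assms(1) that by simp
    finally show ?thesis .
  qed
  have "dotn n (\<lambda>i. x i - (\<Sum>j\<in>I. a j * v j i)) (\<lambda>i. x i - (\<Sum>j\<in>I. a j * v j i))
      = dotn n x x - (\<Sum>j\<in>I. a j * dotn n x (v j)) - ((\<Sum>j\<in>I. a j * dotn n (v j) x)
         - (\<Sum>j\<in>I. a j * (\<Sum>k\<in>I. a k * dotn n (v j) (v k))))"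
    by (simp add: dotn_diff_left dotn_diff_right dotn_sum_left dotn_sum_right)
  also have "(\<Sum>j\<in>I. a j * (\<Sum>k\<in>I. a k * dotn n (v j) (v k))) = (\<Sum>j\<in>I. a j * a j)"
  proof (intro sum.cong refl)
    fix j assume "j \<in> I"
    have "(\<Sum>k\<in>I. a k * dotn n (v j) (v k)) = (\<Sum>k\<in>I. a k * dotn n (v k) (v j))"
      by (simp add: dotn_comm)
    also have "\<dots> = a j" using 1 \<open>j \<in> I\<close> by simp
    finally show "a j * (\<Sum>k\<in>I. a k * dotn n (v j) (v k)) = a j * a j" by simp
  qed
  finally show ?thesis
    by (simp add: a_def[symmetric] dotn_comm[of n "v _" x] power2_eq_square)
qed

lemma bessel:
  assumes "finite I" "orthon n I v"
  shows "(\<Sum>j\<in>I. (dotn n x (v j))\<^sup>2) \<le> dotn n x x"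
proof -
  have "0 \<le> dotn n (\<lambda>i. x i - (\<Sum>j\<in>I. dotn n x (v j) * v j i)) (\<lambda>i. x i - (\<Sum>j\<in>I. dotn n x (v j) * v j i))"
    by (rule dotn_nonneg)
  then show ?thesis unfolding bessel_identity[OF assms] by simp
qed

definition unitv :: "nat \<Rightarrow> nat \<Rightarrow> real" where
  "unitv i = (\<lambda>k. if k = i then 1 else 0)"

lemma dotn_unitv: "i < n \<Longrightarrow> dotn n (unitv i) x = x i"
proof -
  assume "i < n"
  have "(\<Sum>ia<n. unitv i ia * x ia) = (\<Sum>ia<n. if ia = i then x i else 0)"
    by (rule sum.cong) (auto simp: unitv_def)
  then show ?thesis using \<open>i < n\<close> by (simp add: dotn_def)
qed

lemma sum_sq_coord_le1:
  assumes "finite I" "orthon n I v" "i < n"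
  shows "(\<Sum>j\<in>I. (v j i)\<^sup>2) \<le> 1"
proof -
  have "(\<Sum>j\<in>I. (dotn n (unitv i) (v j))\<^sup>2) \<le> dotn n (unitv i) (unitv i)"
    by (rule bessel[OF assms(1,2)])
  moreover have "dotn n (unitv i) (v j) = v j i" for j by (rule dotn_unitv[OF assms(3)])
  moreover have "dotn n (unitv i) (unitv i) = 1" using dotn_unitv[OF assms(3)] by (simp add: unitv_def)
  ultimately show ?thesis by simp
qed

lemma orthon_card_sum:
  assumes "finite I" "orthon n I v"
  shows "(\<Sum>i<n. \<Sum>j\<in>I. (v j i)\<^sup>2) = real (card I)"
proof -
  have "(\<Sum>i<n. \<Sum>j\<in>I. (v j i)\<^sup>2) = (\<Sum>j\<in>I. dotn n (v j) (v j))"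
    unfolding dotn_def power2_eq_square by (rule sum.swap)
  also have "\<dots> = (\<Sum>j\<in>I. 1)" using assms(2) by (intro sum.cong) (auto simp: orthon_def)
  finally show ?thesis by simp
qed

lemma orthon_card:
  assumes "finite I" "orthon n I v"
  shows "card I \<le> n"
proof -
  have "real (card I) = (\<Sum>i<n. \<Sum>j\<in>I. (v j i)\<^sup>2)" using orthon_card_sum[OF assms] by simp
  also have "\<dots> \<le> (\<Sum>i<n. 1)" by (intro sum_mono sum_sq_coord_le1[OF assms]) auto
  finally show ?thesis by simp
qed

lemma orthon_finite:
  assumes "orthon n I v"
  shows "finite I"
proof (rule ccontr)
  assume "infinite I"
  then obtain F where F: "F \<subseteq> I" "finite F" "card F = Suc n"
    using infinite_arbitrarily_large[of I "Suc n"] by blast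
  have "orthon n F v" using assms F(1) unfolding orthon_def by blast
  then have "card F \<le> n" by (rule orthon_card[OF F(2)])
  then show False using F(3) by simp
qed

lemma orthon_complete:
  assumes "orthon n {..<n} v" "i < n" "k < n"
  shows "(\<Sum>j<n. v j i * v j k) = (if i = k then 1 else 0)"
proof -
  have le: "(\<Sum>j<n. (v j i')\<^sup>2) \<le> 1" if "i' < n" for i'
    using sum_sq_coord_le1[OF _ assms(1) that] by simp
  have s: "(\<Sum>i<n. \<Sum>j<n. (v j i)\<^sup>2) = real n"
    using orthon_card_sum[OF _ assms(1)] by simp
  have eq1: "(\<Sum>j<n. (v j i')\<^sup>2) = 1" if "i' < n" for i'
  proof -
    have "(\<Sum>i<n. 1 - (\<Sum>j<n. (v j i)\<^sup>2)) = 0" using s by (simp add: sum_subtractf)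
    moreover have "\<forall>i\<in>{..<n}. 0 \<le> 1 - (\<Sum>j<n. (v j i)\<^sup>2)" using le by auto
    ultimately have "\<forall>i\<in>{..<n}. 1 - (\<Sum>j<n. (v j i)\<^sup>2) = 0"
      by (subst (asm) sum_nonneg_eq_0_iff) auto
    then show ?thesis using that by auto
  qed
  define y where "y = (\<lambda>k. unitv i k - (\<Sum>j<n. dotn n (unitv i) (v j) * v j k))"
  have "dotn n y y = dotn n (unitv i) (unitv i) - (\<Sum>j<n. (dotn n (unitv i) (v j))\<^sup>2)"
    unfolding y_def by (rule bessel_identity) (use assms in auto)
  also have "\<dots> = 0" using eq1[OF assms(2)] assms(2)
    by (simp add: dotn_unitv) (simp add: unitv_def)
  finally have "y k = 0" using dotn_zero_iff assms(3) by blast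
  then have "unitv i k = (\<Sum>j<n. v j i * v j k)" using assms(2) by (simp add: y_def dotn_unitv)
  then show ?thesis by (auto simp: unitv_def)
qed


definition symm :: "nat \<Rightarrow> (nat \<Rightarrow> nat \<Rightarrow> real) \<Rightarrow> bool" where
  "symm n A \<longleftrightarrow> (\<forall>i<n. \<forall>j<n. A i j = A j i)"

definition qf :: "nat \<Rightarrow> (nat \<Rightarrow> nat \<Rightarrow> real) \<Rightarrow> (nat \<Rightarrow> real) \<Rightarrow> real" where
  "qf n A x = dotn n x (mulv n A x)"

definition restr :: "nat \<Rightarrow> (nat \<Rightarrow> real) \<Rightarrow> nat \<Rightarrow> real" where
  "restr n x = (\<lambda>i. if i < n then x i else 0)"

lemma dotn_restr_left: "dotn n (restr n x) y = dotn n x y"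
  by (simp add: dotn_def restr_def)

lemma dotn_restr_right: "dotn n y (restr n x) = dotn n y x"
  by (simp add: dotn_def restr_def)

lemma mulv_restr: "mulv n A (restr n x) = mulv n A x"
  by (simp add: mulv_def restr_def)

lemma dotn_cong:
  assumes "\<And>i. i < n \<Longrightarrow> x i = x' i" "\<And>i. i < n \<Longrightarrow> y i = y' i"
  shows "dotn n x y = dotn n x' y'"
  using assms by (simp add: dotn_def)

lemma mulv_sym:
  assumes "symm n A"
  shows "dotn n (mulv n A x) y = dotn n x (mulv n A y)"
proof -
  have "dotn n (mulv n A x) y = (\<Sum>i<n. \<Sum>k<n. A i k * x k * y i)"
    by (simp add: dotn_def mulv_def sum_distrib_right)
  also have "\<dots> = (\<Sum>k<n. \<Sum>i<n. A i k * x k * y i)" by (rule sum.swap)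
  also have "\<dots> = (\<Sum>k<n. \<Sum>i<n. x k * (A k i * y i))"
    using assms by (intro sum.cong refl) (simp add: symm_def)
  also have "\<dots> = dotn n x (mulv n A y)"
    by (simp add: dotn_def mulv_def sum_distrib_left)
  finally show ?thesis .
qed

lemma mulv_lin: "mulv n A (\<lambda>i. x i + t * y i) = (\<lambda>i. mulv n A x i + t * mulv n A y i)"
  by (simp add: mulv_def distrib_left sum.distrib sum_distrib_left mult.left_commute)

lemma mulv_scale: "mulv n A (\<lambda>i. t * y i) = (\<lambda>i. t * mulv n A y i)"
  by (simp add: mulv_def sum_distrib_left mult.left_commute)

lemma qf_lin:
  assumes "symm n A"
  shows "qf n A (\<lambda>i. x i + t * y i) = qf n A x + 2 * t * dotn n x (mulv n A y) + t\<^sup>2 * qf n A y"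
proof -
  have "qf n A (\<lambda>i. x i + t * y i) = dotn n x (mulv n A x) + t * dotn n x (mulv n A y)
        + (t * dotn n y (mulv n A x) + t * (t * dotn n y (mulv n A y)))"
    by (simp add: qf_def mulv_lin dotn_add_left dotn_add_right dotn_scale_left dotn_scale_right)
  moreover have "dotn n y (mulv n A x) = dotn n x (mulv n A y)"
    using mulv_sym[OF assms, of y x] by (simp add: dotn_comm)
  ultimately show ?thesis by (simp add: qf_def power2_eq_square algebra_simps)
qed

lemma qf_scale: "qf n A (\<lambda>i. t * y i) = t\<^sup>2 * qf n A y"
  by (simp add: qf_def mulv_scale dotn_scale_left dotn_scale_right power2_eq_square)

lemma dotn_normalize:
  assumes "dotn n x x > 0"
  shows "dotn n (\<lambda>i. (1 / sqrt (dotn n x x)) * x i) (\<lambda>i. (1 / sqrt (dotn n x x)) * x i) = 1"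
proof -
  have "dotn n (\<lambda>i. (1 / sqrt (dotn n x x)) * x i) (\<lambda>i. (1 / sqrt (dotn n x x)) * x i)
     = (1 / sqrt (dotn n x x)) * ((1 / sqrt (dotn n x x)) * dotn n x x)"
    by (simp only: dotn_scale_left dotn_scale_right)
  also have "\<dots> = 1" using assms by (simp add: real_sqrt_mult[symmetric] )
  finally show ?thesis .
qed

lemma coord_sq_le: "i < n \<Longrightarrow> (x i)\<^sup>2 \<le> dotn n x x"
  unfolding dotn_def power2_eq_square
  by (rule member_le_sum[of i "{..<n}" "\<lambda>i. x i * x i"]) auto

lemma continuous_dotn: "continuous_on UNIV (\<lambda>x::nat\<Rightarrow>real. dotn n (f x) (g x))"
  if "\<And>i. continuous_on UNIV (\<lambda>x. f x i)" "\<And>i. continuous_on UNIV (\<lambda>x. g x i)"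
  unfolding dotn_def using that by (intro continuous_intros) auto

lemma continuous_mulv: "continuous_on UNIV (\<lambda>x::nat\<Rightarrow>real. mulv n A x i)"
  unfolding mulv_def by (intro continuous_intros) auto

lemma eig_step:
  assumes sym: "symm n A" and kn: "k < n" and orth: "orthon n {..<k} v"
    and eig: "\<forall>j<k. \<forall>i<n. mulv n A (v j) i = lam j * v j i"
  shows "\<exists>x \<mu>. dotn n x x = 1 \<and> (\<forall>j<k. dotn n x (v j) = 0) \<and> (\<forall>i<n. mulv n A x i = \<mu> * x i)"
proof -
  define S where "S = PiE UNIV (\<lambda>i::nat. if i < n then {-1..1::real} else {0})
     \<inter> {x. dotn n x x = 1} \<inter> (\<Inter>j<k. {x. dotn n x (v j) = 0})"
  have "compactin (product_topology (\<lambda>_. euclidean) UNIV) (PiE UNIV (\<lambda>i::nat. if i < n then {-1..1::real} else {0}))"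
    by (subst compactin_PiE) auto
  then have c1: "compact (PiE UNIV (\<lambda>i::nat. if i < n then {-1..1::real} else {0}))"
    by (simp add: euclidean_product_topology)
  have cl2: "closed {x::nat\<Rightarrow>real. dotn n x x = 1}"
    by (rule closed_Collect_eq) (auto intro!: continuous_dotn)
  have cl3: "closed (\<Inter>j<k. {x::nat\<Rightarrow>real. dotn n x (v j) = 0})"
    by (intro closed_INT ballI closed_Collect_eq) (auto intro!: continuous_dotn)
  have compS: "compact S" unfolding S_def
    using c1 cl2 cl3 by (intro compact_Int_closed closed_Int) auto
  have memS: "x \<in> S" if "\<forall>i\<ge>n. x i = 0" "dotn n x x = 1" "\<forall>j<k. dotn n x (v j) = 0" for x
  proof -
    have "x i \<in> (if i < n then {-1..1} else {0})" for i
    proof (cases "i < n")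
      case True
      then have "(x i)\<^sup>2 \<le> 1" using coord_sq_le[OF True, of x] that(2) by simp
      then have "\<bar>x i\<bar> \<le> 1" by (simp add: abs_square_le_1)
      then show ?thesis using True by auto
    qed (use that in auto)
    then show ?thesis using that unfolding S_def by (auto simp: PiE_UNIV_domain)
  qed
  have Sprops: "dotn n x x = 1 \<and> (\<forall>j<k. dotn n x (v j) = 0) \<and> (\<forall>i\<ge>n. x i = 0)" if "x \<in> S" for x
    using that unfolding S_def by (auto simp: PiE_UNIV_domain Pi_iff split: if_splits) (meson not_less)
  have fin: "finite {..<k}" by simp
  have vdot: "dotn n (unitv i) (v j) = v j i" if "i < n" for i j using dotn_unitv[OF that] .
  have "\<exists>i<n. (\<Sum>j<k. (v j i)\<^sup>2) < 1"
  proof (rule ccontr)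
    assume "\<not> ?thesis"
    then have "(\<Sum>i<n. 1) \<le> (\<Sum>i<n. \<Sum>j<k. (v j i)\<^sup>2)" by (intro sum_mono) auto
    also have "\<dots> = real k" using orthon_card_sum[OF fin orth] by simp
    finally show False using kn by simp
  qed
  then obtain i0 where i0: "i0 < n" "(\<Sum>j<k. (v j i0)\<^sup>2) < 1" by blast
  define y where "y = restr n (\<lambda>i. unitv i0 i - (\<Sum>j<k. dotn n (unitv i0) (v j) * v j i))"
  have yy: "dotn n y y = 1 - (\<Sum>j<k. (v j i0)\<^sup>2)"
    unfolding y_def dotn_restr_left dotn_restr_right bessel_identity[OF fin orth]
    using i0 by (simp add: vdot dotn_unitv) (simp add: unitv_def)
  have yv: "dotn n y (v l) = 0" if "l < k" for l
  proof -
    have "dotn n y (v l) = v l i0 - (\<Sum>j<k. v j i0 * dotn n (v j) (v l))"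
      unfolding y_def dotn_restr_left
      by (simp add: dotn_diff_left dotn_sum_left vdot[OF i0(1)] dotn_unitv[OF i0(1)])
    also have "(\<Sum>j<k. v j i0 * dotn n (v j) (v l)) = (\<Sum>j<k. if j = l then v l i0 else 0)"
      using orth that by (intro sum.cong) (auto simp: orthon_def)
    finally show ?thesis using that by simp
  qed
  have ypos: "dotn n y y > 0" using yy i0 by simp
  define x0 where "x0 = (\<lambda>i. (1 / sqrt (dotn n y y)) * y i)"
  have "x0 \<in> S"
  proof (rule memS)
    show "\<forall>i\<ge>n. x0 i = 0" by (simp add: x0_def y_def restr_def)
    show "dotn n x0 x0 = 1" using dotn_normalize[OF ypos] by (simp only: x0_def)
    show "\<forall>j<k. dotn n x0 (v j) = 0" using yv by (simp only: x0_def dotn_scale_left) simp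
  qed
  then have Sne: "S \<noteq> {}" by blast
  have contq: "continuous_on S (qf n A)"
    unfolding qf_def by (rule continuous_on_subset[OF continuous_dotn]) (auto intro: continuous_mulv)
  obtain xs where xs: "xs \<in> S" and xmax: "\<And>y. y \<in> S \<Longrightarrow> qf n A y \<le> qf n A xs"
    using continuous_attains_sup[OF compS Sne contq] by blast
  define \<mu> where "\<mu> = qf n A xs"
  have xs1: "dotn n xs xs = 1" and xsv: "\<forall>j<k. dotn n xs (v j) = 0" and xs0: "\<forall>i\<ge>n. xs i = 0"
    using Sprops[OF xs] by auto
  define w where "w = restr n (\<lambda>i. mulv n A xs i - \<mu> * xs i)"
  have Av: "dotn n x (mulv n A (v j)) = lam j * dotn n x (v j)" if "j < k" for x j
  proof -
    have "dotn n x (mulv n A (v j)) = dotn n x (\<lambda>i. lam j * v j i)"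
      using eig that by (intro dotn_cong) auto
    then show ?thesis by (simp add: dotn_scale_right)
  qed
  have wv: "dotn n w (v j) = 0" if "j < k" for j
    unfolding w_def dotn_restr_left dotn_diff_left dotn_scale_left mulv_sym[OF sym] Av[OF that]
    using xsv that by simp
  have wx: "dotn n w xs = 0"
    unfolding w_def dotn_restr_left dotn_diff_left dotn_scale_left mulv_sym[OF sym]
    using xs1 by (simp add: \<mu>_def qf_def dotn_comm)
  define b where "b = dotn n xs (mulv n A w)"
  have b: "b = dotn n w w"
  proof -
    have "b = dotn n (mulv n A xs) w" unfolding b_def mulv_sym[OF sym] ..
    also have "\<dots> = dotn n (\<lambda>i. w i + \<mu> * xs i) w"
      by (intro dotn_cong) (auto simp: w_def restr_def)
    also have "\<dots> = dotn n w w" using wx by (simp add: dotn_add_left dotn_scale_left dotn_comm)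
    finally show ?thesis .
  qed
  define K where "K = \<mu> * dotn n w w - qf n A w"
  have ineq: "2 * b \<le> t * K" if "t > 0" for t
  proof -
    define z where "z = restr n (\<lambda>i. xs i + t * w i)"
    have zz: "dotn n z z = 1 + t\<^sup>2 * dotn n w w"
      unfolding z_def dotn_restr_left dotn_restr_right
      using xs1 wx by (simp add: dotn_add_left dotn_add_right dotn_scale_left dotn_scale_right
          dotn_comm[of n xs w] power2_eq_square algebra_simps)
    have zpos: "dotn n z z > 0" using zz by (simp add: add_pos_nonneg dotn_nonneg)
    define z' where "z' = (\<lambda>i. (1 / sqrt (dotn n z z)) * z i)"
    have "z' \<in> S"
    proof (rule memS)
      show "\<forall>i\<ge>n. z' i = 0" by (simp add: z'_def z_def restr_def)
      show "dotn n z' z' = 1" using dotn_normalize[OF zpos] by (simp only: z'_def)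
      have "dotn n z (v j) = 0" if "j < k" for j using xsv wv that
        by (simp add: z_def dotn_restr_left dotn_add_left dotn_scale_left)
      then show "\<forall>j<k. dotn n z' (v j) = 0" by (simp only: z'_def dotn_scale_left) simp
    qed
    then have "qf n A z' \<le> \<mu>" using xmax \<mu>_def by simp
    moreover have "qf n A z' = qf n A z / dotn n z z"
    proof -
      have "qf n A z' = (1 / sqrt (dotn n z z))\<^sup>2 * qf n A z" by (simp only: z'_def qf_scale)
      then show ?thesis using zpos by (simp add: power_divide)
    qed
    ultimately have "qf n A z \<le> \<mu> * dotn n z z" using zpos by (simp add: divide_le_eq)
    moreover have "qf n A z = \<mu> + 2 * t * b + t\<^sup>2 * qf n A w"
    proof -
      have "qf n A z = qf n A (\<lambda>i. xs i + t * w i)"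
        unfolding qf_def z_def mulv_restr dotn_restr_left ..
      then show ?thesis by (simp add: qf_lin[OF sym] \<mu>_def b_def)
    qed
    ultimately have "2 * t * b \<le> t\<^sup>2 * K" using zz by (simp add: K_def algebra_simps)
    then have "t * (2 * b) \<le> t * (t * K)" by (simp add: power2_eq_square algebra_simps)
    then show ?thesis using that by simp
  qed
  have "b \<le> 0"
  proof (rule ccontr)
    assume "\<not> b \<le> 0"
    then have bp: "b > 0" by simp
    define t where "t = b / (\<bar>K\<bar> + 1)"
    have tp: "t > 0" using bp by (simp add: t_def)
    have "t * K \<le> t * \<bar>K\<bar>" using tp by (simp add: mult_left_mono)
    also have "t * \<bar>K\<bar> < b"
    proof -
      have "t * \<bar>K\<bar> = b * (\<bar>K\<bar> / (\<bar>K\<bar> + 1))" by (simp add: t_def)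
      also have "\<dots> < b * 1" using bp by (intro mult_strict_left_mono) auto
      finally show ?thesis by simp
    qed
    finally show False using ineq[OF tp] bp by simp
  qed
  then have "dotn n w w = 0" using b dotn_nonneg[of n w] by simp
  then have "\<forall>i<n. w i = 0" by (simp add: dotn_zero_iff)
  then have "\<forall>i<n. mulv n A xs i = \<mu> * xs i" by (simp add: w_def restr_def)
  then show ?thesis using xs1 xsv by blast
qed

lemma spectral_k:
  assumes sym: "symm n A" and "k \<le> n"
  shows "\<exists>lam v. orthon n {..<k} v \<and> (\<forall>j<k. \<forall>i<n. mulv n A (v j) i = lam j * v j i)"
  using assms(2)
proof (induction k)
  case 0
  then show ?case by (auto simp: orthon_def)
next
  case (Suc k)
  then obtain lam v where orth: "orthon n {..<k} v" and eig: "\<forall>j<k. \<forall>i<n. mulv n A (v j) i = lam j * v j i"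
    by auto
  obtain x \<mu> where x: "dotn n x x = 1" "\<forall>j<k. dotn n x (v j) = 0" "\<forall>i<n. mulv n A x i = \<mu> * x i"
    using eig_step[OF sym _ orth eig] Suc.prems by auto
  define v' where "v' = v(k := x)"
  define lam' where "lam' = lam(k := \<mu>)"
  have "orthon n {..<Suc k} v'"
    unfolding orthon_def
  proof (intro ballI)
    fix j l assume "j \<in> {..<Suc k}" "l \<in> {..<Suc k}"
    then show "dotn n (v' j) (v' l) = (if j = l then 1 else 0)"
      using orth x by (cases "j = k"; cases "l = k") (auto simp: v'_def orthon_def dotn_comm)
  qed
  moreover have "\<forall>j<Suc k. \<forall>i<n. mulv n A (v' j) i = lam' j * v' j i"
    using eig x by (auto simp: v'_def lam'_def less_Suc_eq)
  ultimately show ?case by blast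
qed

lemma spectral:
  assumes "\<forall>i<n. \<forall>j<n. D i j = D j i"
  shows "\<exists>lam phi. mat_orth_eigenbasis n D lam phi"
proof -
  have "symm n D" using assms by (simp add: symm_def)
  from spectral_k[OF this order_refl] obtain lam v where
    "orthon n {..<n} v" "\<forall>j<n. \<forall>i<n. mulv n D (v j) i = lam j * v j i" by blast
  then have "mat_orth_eigenbasis n D lam v"
    unfolding mat_orth_eigenbasis_def orthon_def dotn_def mulv_def by auto
  then show ?thesis by blast
qed


abbreviation LM :: "real measure" where "LM \<equiv> lebesgue_on {0..1}"

lemma fmLM: "finite_measure LM"
  by (rule finite_measure_lebesgue_on) (simp add: lmeasurable_cbox[of 0 1, simplified])

lemma meas_const: "(\<lambda>x. c::real) \<in> borel_measurable LM"
  by simp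

lemma Ico_sets: "{a..<b} \<inter> {0..1::real} \<in> sets LM"
  by (auto simp: sets_restrict_space_iff)

lemma meas_ind: "(indicator {a..<b::real} :: real \<Rightarrow> real) \<in> borel_measurable LM"
  unfolding borel_measurable_indicator_iff by (auto simp: sets_restrict_space_iff)

lemma measure_Ico: "0 \<le> a \<Longrightarrow> a \<le> b \<Longrightarrow> b \<le> 1 \<Longrightarrow> Sigma_Algebra.measure LM {a..<b::real} = b - a"
  by (subst measure_restrict_space) auto

lemma integral_ind_Ico:
  assumes "0 \<le> a" "a \<le> b" "b \<le> 1"
  shows "(LINT x|LM. indicator {a..<b::real} x) = b - a"
proof -
  have "{a..<b} \<inter> space LM = {a..<b}" using assms by auto
  then show ?thesis using measure_Ico[OF assms] by (simp add: integral_indicator)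
qed

lemma L2D: "f \<in> L2 \<Longrightarrow> f \<in> borel_measurable LM"  "f \<in> L2 \<Longrightarrow> integrable LM (\<lambda>x. (f x)\<^sup>2)"
  by (auto simp: L2_def)

lemma L2I: "f \<in> borel_measurable LM \<Longrightarrow> integrable LM (\<lambda>x. (f x)\<^sup>2) \<Longrightarrow> f \<in> L2"
  by (auto simp: L2_def)

lemma abs_mult_le_sq: "\<bar>a * b\<bar> \<le> a\<^sup>2 + (b::real)\<^sup>2"
proof -
  have "0 \<le> (\<bar>a\<bar> - \<bar>b\<bar>)\<^sup>2" by simp
  then have "2 * (\<bar>a\<bar> * \<bar>b\<bar>) \<le> a\<^sup>2 + b\<^sup>2" by (simp add: power2_diff)
  moreover have "\<bar>a\<bar> * \<bar>b\<bar> \<ge> 0" by simp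
  moreover have "\<bar>a * b\<bar> = \<bar>a\<bar> * \<bar>b\<bar>" by (simp add: abs_mult)
  ultimately show ?thesis by linarith
qed

lemma L2_mult_int:
  assumes "f \<in> L2" "g \<in> L2"
  shows "integrable LM (\<lambda>x. f x * g x)"
proof (rule Bochner_Integration.integrable_bound)
  show "integrable LM (\<lambda>x. (f x)\<^sup>2 + (g x)\<^sup>2)" using L2D assms by auto
  show "(\<lambda>x. f x * g x) \<in> borel_measurable LM" using L2D assms by auto
  show "AE x in LM. norm (f x * g x) \<le> norm ((f x)\<^sup>2 + (g x)\<^sup>2)"
  proof (rule AE_I2)
    fix x
    have "\<bar>f x * g x\<bar> \<le> (f x)\<^sup>2 + (g x)\<^sup>2" by (rule abs_mult_le_sq)
    then show "norm (f x * g x) \<le> norm ((f x)\<^sup>2 + (g x)\<^sup>2)" by simp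
  qed
qed

lemma L2_bounded:
  assumes "f \<in> borel_measurable LM" "\<And>x. \<bar>f x\<bar> \<le> B"
  shows "f \<in> L2"
proof (rule L2I[OF assms(1)])
  show "integrable LM (\<lambda>x. (f x)\<^sup>2)"
  proof (rule finite_measure.integrable_const_bound[OF fmLM])
    show "AE x in LM. norm ((f x)\<^sup>2) \<le> B\<^sup>2"
    proof (intro AE_I2)
      fix x
      have "(f x)\<^sup>2 = \<bar>f x\<bar>\<^sup>2" by simp
      also have "\<dots> \<le> B\<^sup>2" by (rule power_mono[OF assms(2)]) simp
      finally show "norm ((f x)\<^sup>2) \<le> B\<^sup>2" by simp
    qed
    show "(\<lambda>x. (f x)\<^sup>2) \<in> borel_measurable LM" using assms(1) by simp
  qed
qed

lemma L2_const: "(\<lambda>x. c) \<in> L2"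
  by (rule L2_bounded[of _ "\<bar>c\<bar>"]) auto

lemma L2_ind: "indicator {a..<b::real} \<in> L2"
  by (rule L2_bounded[OF meas_ind, where B=1]) (simp add: indicator_def)

lemma L2_int: "f \<in> L2 \<Longrightarrow> integrable LM f"
  using L2_mult_int[of f "\<lambda>x. 1"] L2_const by simp

lemma L2_add: assumes "f \<in> L2" "g \<in> L2" shows "(\<lambda>x. f x + g x) \<in> L2"
proof (rule L2I)
  show "(\<lambda>x. f x + g x) \<in> borel_measurable LM" using L2D assms by auto
  have "integrable LM (\<lambda>x. (f x)\<^sup>2 + 2 * (f x * g x) + (g x)\<^sup>2)"
    using L2D assms L2_mult_int by auto
  moreover have "\<And>x. (f x + g x)\<^sup>2 = (f x)\<^sup>2 + 2 * (f x * g x) + (g x)\<^sup>2"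
    by (simp add: power2_eq_square algebra_simps)
  ultimately show "integrable LM (\<lambda>x. (f x + g x)\<^sup>2)" by simp
qed

lemma L2_scale: assumes "f \<in> L2" shows "(\<lambda>x. c * f x) \<in> L2"
proof (rule L2I)
  show "(\<lambda>x. c * f x) \<in> borel_measurable LM" using L2D assms by auto
  have "integrable LM (\<lambda>x. c\<^sup>2 * (f x)\<^sup>2)" using L2D assms by auto
  then show "integrable LM (\<lambda>x. (c * f x)\<^sup>2)" by (simp add: power_mult_distrib)
qed

lemma L2_uminus: "f \<in> L2 \<Longrightarrow> (\<lambda>x. - f x) \<in> L2"
  using L2_scale[of f "-1"] by simp

lemma L2_diff: "f \<in> L2 \<Longrightarrow> g \<in> L2 \<Longrightarrow> (\<lambda>x. f x - g x) \<in> L2"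
  using L2_add[OF _ L2_uminus] by simp

lemma L2_mult: "f \<in> L2 \<Longrightarrow> (\<lambda>x. c * f x) \<in> L2"
  by (rule L2_scale)

lemma L2_sum: "finite I \<Longrightarrow> (\<And>i. i \<in> I \<Longrightarrow> f i \<in> L2) \<Longrightarrow> (\<lambda>x. \<Sum>i\<in>I. f i x) \<in> L2"
  by (induction I rule: finite_induct) (auto intro!: L2_add simp: L2_const[of 0, simplified])

lemma L2_sum_scale: "finite I \<Longrightarrow> (\<And>i. i \<in> I \<Longrightarrow> f i \<in> L2) \<Longrightarrow> (\<lambda>x. \<Sum>i\<in>I. c i * f i x) \<in> L2"
  by (rule L2_sum) (auto intro: L2_scale)

lemma L2_zero: "(\<lambda>x. 0) \<in> L2"
  using L2_const by simp

lemma l2_inner_comm: "l2_inner f g = l2_inner g f"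
  by (simp add: l2_inner_def mult.commute)

lemma l2_inner_add_left:
  assumes "f \<in> L2" "g \<in> L2" "h \<in> L2"
  shows "l2_inner (\<lambda>x. f x + g x) h = l2_inner f h + l2_inner g h"
  using L2_mult_int assms by (simp add: l2_inner_def distrib_right)

lemma l2_inner_diff_left:
  assumes "f \<in> L2" "g \<in> L2" "h \<in> L2"
  shows "l2_inner (\<lambda>x. f x - g x) h = l2_inner f h - l2_inner g h"
  using L2_mult_int assms by (simp add: l2_inner_def left_diff_distrib)

lemma l2_inner_scale_left:
  shows "l2_inner (\<lambda>x. c * f x) h = c * l2_inner f h"
  by (simp add: l2_inner_def mult.assoc)

lemma l2_inner_sum_left:
  assumes "finite I" "\<And>i. i \<in> I \<Longrightarrow> f i \<in> L2" "h \<in> L2"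
  shows "l2_inner (\<lambda>x. \<Sum>i\<in>I. f i x) h = (\<Sum>i\<in>I. l2_inner (f i) h)"
proof -
  have "l2_inner (\<lambda>x. \<Sum>i\<in>I. f i x) h = (LINT x|LM. (\<Sum>i\<in>I. f i x * h x))"
    by (simp add: l2_inner_def sum_distrib_right)
  also have "\<dots> = (\<Sum>i\<in>I. LINT x|LM. f i x * h x)"
    by (rule Bochner_Integration.integral_sum) (use L2_mult_int assms in auto)
  finally show ?thesis by (simp add: l2_inner_def)
qed

lemma l2_inner_sum_scale_left:
  assumes "finite I" "\<And>i. i \<in> I \<Longrightarrow> f i \<in> L2" "h \<in> L2"
  shows "l2_inner (\<lambda>x. \<Sum>i\<in>I. c i * f i x) h = (\<Sum>i\<in>I. c i * l2_inner (f i) h)"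
  using l2_inner_sum_left[of I "\<lambda>i x. c i * f i x" h] assms
  by (simp add: L2_scale l2_inner_scale_left)

lemma l2_inner_sum_scale_right:
  assumes "finite I" "\<And>i. i \<in> I \<Longrightarrow> f i \<in> L2" "h \<in> L2"
  shows "l2_inner h (\<lambda>x. \<Sum>i\<in>I. c i * f i x) = (\<Sum>i\<in>I. c i * l2_inner h (f i))"
  using l2_inner_sum_scale_left[OF assms] by (simp add: l2_inner_comm)

lemma l2_inner_nonneg: "l2_inner f f \<ge> 0"
  by (simp add: l2_inner_def)

lemma l2_norm_sq: "(l2_norm f)\<^sup>2 = l2_inner f f"
  by (simp add: l2_norm_def l2_inner_nonneg)

lemma l2_inner_zero_AE:
  assumes "f \<in> L2" "l2_inner f f = 0"
  shows "AE x in LM. f x = 0"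
proof -
  have "(LINT x|LM. (f x)\<^sup>2) = 0" using assms(2) by (simp add: l2_inner_def power2_eq_square)
  then have "AE x in LM. (f x)\<^sup>2 = 0"
    using integral_nonneg_eq_0_iff_AE[of LM "\<lambda>x. (f x)\<^sup>2"] L2D(2)[OF assms(1)] by simp
  then show ?thesis by simp
qed

lemma l2_norm_zero_AE:
  assumes "f \<in> L2" "l2_norm f = 0"
  shows "AE x in LM. f x = 0"
  using l2_inner_zero_AE[OF assms(1)] assms(2) l2_norm_sq[of f] by simp

lemma l2_inner_cong_AE:
  assumes "f \<in> borel_measurable LM" "f' \<in> borel_measurable LM" "g \<in> borel_measurable LM"
    "AE x in LM. f x = f' x"
  shows "l2_inner f g = l2_inner f' g"
  unfolding l2_inner_def using assms by (intro integral_cong_AE) auto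

lemma l2_norm_cong_AE:
  assumes "f \<in> borel_measurable LM" "f' \<in> borel_measurable LM" "AE x in LM. f x = f' x"
  shows "l2_norm f = l2_norm f'"
proof -
  have "l2_inner f f = l2_inner f' f'"
    unfolding l2_inner_def using assms by (intro integral_cong_AE) auto
  then show ?thesis by (simp add: l2_norm_def)
qed

lemma l2_norm_zero_fun: "l2_norm (\<lambda>x. 0) = 0"
  by (simp add: l2_norm_def l2_inner_def)


definition Dst :: "(real \<Rightarrow> real) \<Rightarrow> (real \<Rightarrow> real) \<Rightarrow> real" where
  "Dst f g = l2_inner (\<lambda>x. f x - g x) (\<lambda>x. f x - g x)"

lemma Dst_nonneg: "Dst f g \<ge> 0"
  by (simp add: Dst_def l2_inner_nonneg)

lemma Dst_self: "Dst f f = 0"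
  by (simp add: Dst_def l2_inner_def)

lemma Dst_tri:
  assumes "f \<in> L2" "g \<in> L2" "h \<in> L2"
  shows "Dst f h \<le> 2 * Dst f g + 2 * Dst g h"
proof -
  have i1: "integrable LM (\<lambda>x. (f x - h x) * (f x - h x))"
    using assms by (intro L2_mult_int L2_diff)
  have i2: "integrable LM (\<lambda>x. (f x - g x) * (f x - g x))"
    using assms by (intro L2_mult_int L2_diff)
  have i3: "integrable LM (\<lambda>x. (g x - h x) * (g x - h x))"
    using assms by (intro L2_mult_int L2_diff)
  have "Dst f h \<le> (LINT x|LM. 2 * ((f x - g x) * (f x - g x)) + 2 * ((g x - h x) * (g x - h x)))"
    unfolding Dst_def l2_inner_def
  proof (rule integral_mono)
    show "integrable LM (\<lambda>x. 2 * ((f x - g x) * (f x - g x)) + 2 * ((g x - h x) * (g x - h x)))"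
      using i2 i3 by auto
    fix x
    have "0 \<le> ((f x - g x) - (g x - h x))\<^sup>2" by simp
    then show "(f x - h x) * (f x - h x) \<le> 2 * ((f x - g x) * (f x - g x)) + 2 * ((g x - h x) * (g x - h x))"
      by (simp add: power2_eq_square algebra_simps)
  qed (use i1 in auto)
  also have "\<dots> = 2 * Dst f g + 2 * Dst g h"
    unfolding Dst_def l2_inner_def using i2 i3 by simp
  finally show ?thesis .
qed

lemma Dst_add:
  assumes "f \<in> L2" "g \<in> L2" "u \<in> L2" "v \<in> L2"
  shows "Dst (\<lambda>x. f x + g x) (\<lambda>x. u x + v x) \<le> 2 * Dst f u + 2 * Dst g v"
proof -
  have i2: "integrable LM (\<lambda>x. (f x - u x) * (f x - u x))"
    using assms by (intro L2_mult_int L2_diff)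
  have i3: "integrable LM (\<lambda>x. (g x - v x) * (g x - v x))"
    using assms by (intro L2_mult_int L2_diff)
  have i1: "integrable LM (\<lambda>x. (f x + g x - (u x + v x)) * (f x + g x - (u x + v x)))"
    using assms by (intro L2_mult_int L2_diff L2_add)
  have "Dst (\<lambda>x. f x + g x) (\<lambda>x. u x + v x) \<le> (LINT x|LM. 2 * ((f x - u x) * (f x - u x)) + 2 * ((g x - v x) * (g x - v x)))"
    unfolding Dst_def l2_inner_def
  proof (rule integral_mono)
    show "integrable LM (\<lambda>x. 2 * ((f x - u x) * (f x - u x)) + 2 * ((g x - v x) * (g x - v x)))"
      using i2 i3 by auto
    fix x
    have "0 \<le> ((f x - u x) - (g x - v x))\<^sup>2" by simp
    then show "(f x + g x - (u x + v x)) * (f x + g x - (u x + v x)) \<le> 2 * ((f x - u x) * (f x - u x)) + 2 * ((g x - v x) * (g x - v x))"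
      by (simp add: power2_eq_square algebra_simps)
  qed (use i1 in auto)
  also have "\<dots> = 2 * Dst f u + 2 * Dst g v"
    unfolding Dst_def l2_inner_def using i2 i3 by simp
  finally show ?thesis .
qed

lemma Dst_scale: "Dst (\<lambda>x. c * f x) (\<lambda>x. c * u x) = c\<^sup>2 * Dst f u"
proof -
  have "(\<lambda>x. (c * f x - c * u x) * (c * f x - c * u x)) = (\<lambda>x. c\<^sup>2 * ((f x - u x) * (f x - u x)))"
    by (auto simp: power2_eq_square algebra_simps)
  then show ?thesis by (simp add: Dst_def l2_inner_def)
qed

lemma Dst_cong: "(\<And>x. f x = f' x) \<Longrightarrow> (\<And>x. g x = g' x) \<Longrightarrow> Dst f g = Dst f' g'"
  by (simp add: Dst_def)

definition orthseq :: "(nat \<Rightarrow> real \<Rightarrow> real) \<Rightarrow> bool" where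
  "orthseq phi \<longleftrightarrow> (\<forall>j. phi j \<in> L2) \<and> (\<forall>j k. l2_inner (phi j) (phi k) = (if j = k then 1 else 0))"

definition spanN :: "(nat \<Rightarrow> real \<Rightarrow> real) \<Rightarrow> nat \<Rightarrow> (real \<Rightarrow> real) \<Rightarrow> bool" where
  "spanN phi N f \<longleftrightarrow> (\<exists>\<beta>. \<forall>x. f x = (\<Sum>j<N. \<beta> j * phi j x))"

definition approx :: "(nat \<Rightarrow> real \<Rightarrow> real) \<Rightarrow> (real \<Rightarrow> real) \<Rightarrow> bool" where
  "approx phi f \<longleftrightarrow> (\<forall>e>0. \<exists>N g. spanN phi N g \<and> Dst f g < e)"

lemma spanN_mono:
  assumes "spanN phi N f" "N \<le> N'"
  shows "spanN phi N' f"
proof -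
  obtain \<beta> where b: "\<And>x. f x = (\<Sum>j<N. \<beta> j * phi j x)" using assms(1) by (auto simp: spanN_def)
  have fx: "f x = (\<Sum>j<N'. (if j < N then \<beta> j else 0) * phi j x)" for x
  proof -
    have "(\<Sum>j<N'. (if j < N then \<beta> j else 0) * phi j x) = (\<Sum>j<N. (if j < N then \<beta> j else 0) * phi j x)"
      using assms(2) by (intro sum.mono_neutral_right) auto
    then show ?thesis using b by simp
  qed
  show ?thesis unfolding spanN_def by (rule exI[of _ "\<lambda>j. if j < N then \<beta> j else 0"]) (use fx in auto)
qed

lemma spanN_L2:
  assumes "orthseq phi" "spanN phi N f"
  shows "f \<in> L2"
proof -
  obtain \<beta> where b: "\<And>x. f x = (\<Sum>j<N. \<beta> j * phi j x)" using assms(2) by (auto simp: spanN_def)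
  have "(\<lambda>x. \<Sum>j<N. \<beta> j * phi j x) \<in> L2"
    using assms(1) by (intro L2_sum_scale) (auto simp: orthseq_def)
  moreover have "f = (\<lambda>x. \<Sum>j<N. \<beta> j * phi j x)" using b by auto
  ultimately show ?thesis by simp
qed

lemma spanN_basis:
  assumes "j < N" shows "spanN phi N (phi j)"
proof -
  have "phi j x = (\<Sum>k<N. (if k = j then 1 else 0) * phi k x)" for x
  proof -
    have "(\<Sum>k<N. (if k = j then 1 else 0) * phi k x) = (\<Sum>k<N. if k = j then phi j x else 0)"
      by (intro sum.cong) auto
    then show ?thesis using assms by simp
  qed
  then show ?thesis unfolding spanN_def by (intro exI[of _ "\<lambda>k. if k = j then 1 else 0"]) auto
qed

lemma spanN_add:
  assumes "spanN phi N f" "spanN phi N g" shows "spanN phi N (\<lambda>x. f x + g x)"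
proof -
  obtain \<beta> where b: "\<And>x. f x = (\<Sum>j<N. \<beta> j * phi j x)" using assms(1) by (auto simp: spanN_def)
  obtain \<gamma> where c: "\<And>x. g x = (\<Sum>j<N. \<gamma> j * phi j x)" using assms(2) by (auto simp: spanN_def)
  have "f x + g x = (\<Sum>j<N. (\<beta> j + \<gamma> j) * phi j x)" for x
    by (simp add: b c distrib_right sum.distrib)
  then show ?thesis unfolding spanN_def by (intro exI[of _ "\<lambda>j. \<beta> j + \<gamma> j"]) auto
qed

lemma spanN_scale:
  assumes "spanN phi N f" shows "spanN phi N (\<lambda>x. c * f x)"
proof -
  obtain \<beta> where b: "\<And>x. f x = (\<Sum>j<N. \<beta> j * phi j x)" using assms(1) by (auto simp: spanN_def)
  have "c * f x = (\<Sum>j<N. (c * \<beta> j) * phi j x)" for x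
    by (simp add: b sum_distrib_left mult.assoc)
  then show ?thesis unfolding spanN_def by (intro exI[of _ "\<lambda>j. c * \<beta> j"]) auto
qed

lemma spanN_zero: "spanN phi N (\<lambda>x. 0)"
  unfolding spanN_def by (rule exI[of _ "\<lambda>j. 0"]) simp

lemma spanN_sum: "finite I \<Longrightarrow> (\<And>i. i \<in> I \<Longrightarrow> spanN phi N (f i)) \<Longrightarrow> spanN phi N (\<lambda>x. \<Sum>i\<in>I. f i x)"
  by (induction I rule: finite_induct) (auto intro: spanN_add spanN_zero)

lemma spanN_cong: "spanN phi N f \<Longrightarrow> (\<And>x. f x = g x) \<Longrightarrow> spanN phi N g"
  unfolding spanN_def by auto

lemma approx_spanN: "spanN phi N f \<Longrightarrow> approx phi f"
  unfolding approx_def using Dst_self by fastforce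

lemma approx_add:
  assumes os: "orthseq phi" and f: "f \<in> L2" "approx phi f" and g: "g \<in> L2" "approx phi g"
  shows "approx phi (\<lambda>x. f x + g x)"
  unfolding approx_def
proof (intro allI impI)
  fix e :: real assume e: "e > 0"
  obtain N1 u where u: "spanN phi N1 u" "Dst f u < e / 4" using f(2) e unfolding approx_def
    by (meson divide_pos_pos zero_less_numeral)
  obtain N2 v where v: "spanN phi N2 v" "Dst g v < e / 4" using g(2) e unfolding approx_def
    by (meson divide_pos_pos zero_less_numeral)
  have u': "spanN phi (max N1 N2) u" "spanN phi (max N1 N2) v"
    using u v by (auto intro: spanN_mono)
  have "Dst (\<lambda>x. f x + g x) (\<lambda>x. u x + v x) \<le> 2 * Dst f u + 2 * Dst g v"
    using spanN_L2[OF os] u v f g by (intro Dst_add) auto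
  also have "\<dots> < e" using u v by simp
  finally show "\<exists>N h. spanN phi N h \<and> Dst (\<lambda>x. f x + g x) h < e"
    using spanN_add[OF u'] by blast
qed

lemma approx_scale:
  assumes "approx phi f"
  shows "approx phi (\<lambda>x. c * f x)"
  unfolding approx_def
proof (intro allI impI)
  fix e :: real assume e: "e > 0"
  obtain N u where u: "spanN phi N u" "Dst f u < e / (c\<^sup>2 + 1)"
    using assms e unfolding approx_def by (meson divide_pos_pos add_nonneg_pos zero_le_power2 zero_less_one)
  have "Dst (\<lambda>x. c * f x) (\<lambda>x. c * u x) = c\<^sup>2 * Dst f u" by (rule Dst_scale)
  also have "\<dots> \<le> (c\<^sup>2 + 1) * Dst f u" using Dst_nonneg[of f u] by (simp add: mult_right_mono)
  also have "\<dots> < e" using u(2) by (simp add: field_simps add_pos_nonneg)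
  finally show "\<exists>N h. spanN phi N h \<and> Dst (\<lambda>x. c * f x) h < e"
    using spanN_scale[OF u(1)] by blast
qed

lemma approx_sum:
  assumes os: "orthseq phi"
  shows "finite I \<Longrightarrow> (\<And>i. i \<in> I \<Longrightarrow> f i \<in> L2 \<and> approx phi (f i)) \<Longrightarrow> approx phi (\<lambda>x. \<Sum>i\<in>I. f i x)"
proof (induction I rule: finite_induct)
  case empty
  then show ?case using approx_spanN[OF spanN_zero] by simp
next
  case (insert a I)
  have "approx phi (\<lambda>x. f a x + (\<Sum>i\<in>I. f i x))"
    using insert by (intro approx_add[OF os] L2_sum) auto
  then show ?case using insert by simp
qed

lemma approx_closure:
  assumes os: "orthseq phi" and f: "f \<in> L2"
    and A: "\<And>e. e > 0 \<Longrightarrow> \<exists>g. g \<in> L2 \<and> approx phi g \<and> Dst f g < e"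
  shows "approx phi f"
  unfolding approx_def
proof (intro allI impI)
  fix e :: real assume e: "e > 0"
  obtain g where g: "g \<in> L2" "approx phi g" "Dst f g < e / 4" using A[of "e/4"] e by auto
  obtain N u where u: "spanN phi N u" "Dst g u < e / 4" using g(2) e unfolding approx_def
    by (meson divide_pos_pos zero_less_numeral)
  have "Dst f u \<le> 2 * Dst f g + 2 * Dst g u"
    using spanN_L2[OF os u(1)] f g by (intro Dst_tri) auto
  also have "\<dots> < e" using u g by simp
  finally show "\<exists>N h. spanN phi N h \<and> Dst f h < e" using u by blast
qed

lemma Dst_psum:
  assumes os: "orthseq phi" and f: "f \<in> L2"
  shows "Dst f (\<lambda>x. \<Sum>j<N. \<beta> j * phi j x)
       = l2_inner f f - 2 * (\<Sum>j<N. \<beta> j * l2_inner f (phi j)) + (\<Sum>j<N. (\<beta> j)\<^sup>2)"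
proof -
  have ph: "\<And>j. phi j \<in> L2" and on: "\<And>j k. l2_inner (phi j) (phi k) = (if j = k then 1 else 0)"
    using os by (auto simp: orthseq_def)
  define P where "P = (\<lambda>x. \<Sum>j<N. \<beta> j * phi j x)"
  have P: "P \<in> L2" unfolding P_def using ph by (intro L2_sum_scale) auto
  have fP: "l2_inner P f = (\<Sum>j<N. \<beta> j * l2_inner f (phi j))"
    unfolding P_def using ph f by (subst l2_inner_sum_scale_left) (auto simp: l2_inner_comm)
  have PP: "l2_inner P P = (\<Sum>j<N. (\<beta> j)\<^sup>2)"
  proof -
    have "l2_inner P P = (\<Sum>j<N. \<beta> j * l2_inner (phi j) P)"
      unfolding P_def[of] using ph P by (subst l2_inner_sum_scale_left) (auto simp: P_def)
    also have "\<dots> = (\<Sum>j<N. \<beta> j * (\<Sum>k<N. \<beta> k * l2_inner (phi j) (phi k)))"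
      unfolding P_def using ph by (subst l2_inner_sum_scale_right) auto
    also have "\<dots> = (\<Sum>j<N. \<beta> j * \<beta> j)"
    proof (intro sum.cong refl)
      fix j assume "j \<in> {..<N}"
      have "(\<Sum>k<N. \<beta> k * l2_inner (phi j) (phi k)) = (\<Sum>k<N. if k = j then \<beta> j else 0)"
        by (intro sum.cong) (auto simp: on)
      also have "\<dots> = \<beta> j" using \<open>j \<in> {..<N}\<close> by simp
      finally show "\<beta> j * (\<Sum>k<N. \<beta> k * l2_inner (phi j) (phi k)) = \<beta> j * \<beta> j" by simp
    qed
    finally show ?thesis by (simp add: power2_eq_square)
  qed
  have fP': "l2_inner (\<lambda>x. f x - P x) f = l2_inner f f - l2_inner P f"
    by (rule l2_inner_diff_left[OF f P f])
  have PP': "l2_inner (\<lambda>x. f x - P x) P = l2_inner f P - l2_inner P P"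
    by (rule l2_inner_diff_left[OF f P P])
  have "Dst f P = l2_inner f (\<lambda>x. f x - P x) - l2_inner P (\<lambda>x. f x - P x)"
    unfolding Dst_def by (rule l2_inner_diff_left[OF f P L2_diff[OF f P]])
  also have "\<dots> = (l2_inner f f - l2_inner P f) - (l2_inner f P - l2_inner P P)"
    using fP' PP' by (simp add: l2_inner_comm[of f "\<lambda>x. f x - P x"] l2_inner_comm[of P "\<lambda>x. f x - P x"])
  finally have "Dst f P = (l2_inner f f - l2_inner P f) - (l2_inner f P - l2_inner P P)" .
  moreover have "l2_inner f P = l2_inner P f" by (rule l2_inner_comm)
  ultimately show ?thesis using fP PP unfolding P_def by linarith
qed

lemma best_approx:
  assumes os: "orthseq phi" and f: "f \<in> L2"
  shows "Dst f (\<lambda>x. \<Sum>j<N. l2_inner f (phi j) * phi j x) \<le> Dst f (\<lambda>x. \<Sum>j<N. \<beta> j * phi j x)"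
proof -
  define a where "a j = l2_inner f (phi j)" for j
  have "0 \<le> (\<Sum>j<N. (\<beta> j - a j)\<^sup>2)" by (simp add: sum_nonneg)
  also have "\<dots> = (\<Sum>j<N. ((\<beta> j)\<^sup>2 - 2 * (\<beta> j * a j) + (a j)\<^sup>2))"
    by (intro sum.cong refl) (simp add: power2_diff)
  also have "\<dots> = (\<Sum>j<N. (\<beta> j)\<^sup>2) - 2 * (\<Sum>j<N. \<beta> j * a j) + (\<Sum>j<N. (a j)\<^sup>2)"
    by (simp add: sum.distrib sum_subtractf sum_distrib_left)
  finally have *: "0 \<le> (\<Sum>j<N. (\<beta> j)\<^sup>2) - 2 * (\<Sum>j<N. \<beta> j * a j) + (\<Sum>j<N. (a j)\<^sup>2)" .
  have **: "(\<Sum>j<N. a j * a j) = (\<Sum>j<N. (a j)\<^sup>2)" by (simp add: power2_eq_square)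
  show ?thesis
    unfolding Dst_psum[OF os f] a_def[symmetric] using * ** by linarith
qed

lemma approx_complete:
  assumes os: "orthseq phi" and f: "f \<in> L2" and ap: "approx phi f"
  shows "(\<lambda>N. l2_norm (\<lambda>x. f x - (\<Sum>j<N. l2_inner f (phi j) * phi j x))) \<longlonglongrightarrow> 0"
proof -
  define d where "d N = Dst f (\<lambda>x. \<Sum>j<N. l2_inner f (phi j) * phi j x)" for N
  have "d \<longlonglongrightarrow> 0"
  proof (rule LIMSEQ_I)
    fix e :: real assume e: "e > 0"
    obtain N0 g where g: "spanN phi N0 g" "Dst f g < e" using ap e unfolding approx_def by blast
    have "norm (d N - 0) < e" if NN: "N \<ge> N0" for N
    proof -
      obtain \<beta> where b: "\<And>x. g x = (\<Sum>j<N. \<beta> j * phi j x)"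
        using spanN_mono[OF g(1) NN] unfolding spanN_def by blast
      have "d N \<le> Dst f g" unfolding d_def b[abs_def] by (rule best_approx[OF os f])
      then show ?thesis using g(2) Dst_nonneg by (simp add: d_def)
    qed
    then show "\<exists>N0. \<forall>N\<ge>N0. norm (d N - 0) < e" by blast
  qed
  then have "(\<lambda>N. sqrt (d N)) \<longlonglongrightarrow> sqrt 0" by (intro tendsto_real_sqrt)
  then show ?thesis by (simp add: d_def Dst_def l2_norm_def)
qed


definition cell :: "nat \<Rightarrow> nat \<Rightarrow> nat \<Rightarrow> real set" where
  "cell m K q = {real q / (real m * 2^K) ..< real (Suc q) / (real m * 2^K)}"

definition chi :: "nat \<Rightarrow> nat \<Rightarrow> nat \<Rightarrow> real \<Rightarrow> real" where
  "chi m K q = indicator (cell m K q)"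

lemma mem_cell:
  assumes "m > 0"
  shows "x \<in> cell m K q \<longleftrightarrow> \<lfloor>x * (real m * 2^K)\<rfloor> = int q"
proof -
  have c: "real m * 2^K > 0" using assms by simp
  have "x \<in> cell m K q \<longleftrightarrow> real q \<le> x * (real m * 2^K) \<and> x * (real m * 2^K) < real q + 1"
    unfolding cell_def using c by (auto simp: field_simps)
  also have "\<dots> \<longleftrightarrow> \<lfloor>x * (real m * 2^K)\<rfloor> = int q" by (simp add: floor_eq_iff)
  finally show ?thesis .
qed

lemma cell_disj: "m > 0 \<Longrightarrow> x \<in> cell m K q \<Longrightarrow> x \<in> cell m K q' \<Longrightarrow> q = q'"
  by (simp add: mem_cell)

lemma cell_nest:
  assumes "m > 0" "K \<le> k" "x \<in> cell m k q"
  shows "x \<in> cell m K (q div 2^(k-K))"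
proof -
  have fl: "\<lfloor>x * (real m * 2^k)\<rfloor> = int q" using assms by (simp add: mem_cell)
  have p: "(2::real)^k = 2^K * 2^(k-K)" using assms(2) by (metis le_add_diff_inverse power_add)
  have eq: "x * (real m * 2^K) = x * (real m * 2^k) / real_of_int (2^(k-K))"
    by (simp add: p)
  have "\<lfloor>x * (real m * 2^K)\<rfloor> = \<lfloor>x * (real m * 2^k) / real_of_int (2^(k-K))\<rfloor>"
    by (simp only: eq)
  also have "\<dots> = \<lfloor>x * (real m * 2^k)\<rfloor> div 2^(k-K)"
    by (rule floor_divide_real_eq_div) simp
  also have "\<dots> = int (q div 2^(k-K))" using fl by (simp add: zdiv_int)
  finally show ?thesis using assms(1) by (simp add: mem_cell)
qed

lemma chi_mult_same:
  assumes "m > 0"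
  shows "chi m K q x * chi m K q' x = (if q = q' then chi m K q x else 0)"
  using cell_disj[OF assms, of x K q q'] by (auto simp: chi_def indicator_def)

lemma chi_mult_nest:
  assumes "m > 0" "K \<le> k"
  shows "chi m K r x * chi m k q x = (if r = q div 2^(k-K) then chi m k q x else 0)"
  using cell_nest[OF assms, of x q] cell_disj[OF assms(1), of x K r "q div 2^(k-K)"]
  by (auto simp: chi_def indicator_def)

lemma chi_split:
  assumes "m > 0"
  shows "chi m K q x = chi m (Suc K) (2*q) x + chi m (Suc K) (Suc (2*q)) x"
proof -
  have c: "real m * 2^K > 0" using assms by simp
  have m0: "real m > 0" using assms by simp
  have e1: "real (2*q) / (real m * 2^Suc K) = real q / (real m * 2^K)" using c m0 by (simp add: field_simps)
  have e2: "real (Suc (2*q)) / (real m * 2^Suc K) = (real q + 1/2) / (real m * 2^K)"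
    using c m0 by (simp add: field_simps)
  have e3: "real (Suc (Suc (2*q))) / (real m * 2^Suc K) = real (Suc q) / (real m * 2^K)"
    using c m0 by (simp add: field_simps)
  have le1: "real q / (real m * 2^K) \<le> (real q + 1/2) / (real m * 2^K)"
    using c by (intro divide_right_mono) auto
  have le2: "(real q + 1/2) / (real m * 2^K) \<le> real (Suc q) / (real m * 2^K)"
    using c by (intro divide_right_mono) auto
  show ?thesis
    unfolding chi_def cell_def e1 e2 e3 using le1 le2
    by (auto simp: indicator_def)
qed

lemma cell_sub:
  assumes "m > 0" "q < m * 2^K"
  shows "0 \<le> real q / (real m * 2^K)" "real q / (real m * 2^K) \<le> real (Suc q) / (real m * 2^K)"
        "real (Suc q) / (real m * 2^K) \<le> 1"
proof -
  have c: "real m * 2^K > 0" using assms by simp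
  show "0 \<le> real q / (real m * 2^K)" using c by simp
  show "real q / (real m * 2^K) \<le> real (Suc q) / (real m * 2^K)" using c by (intro divide_right_mono) auto
  have "real (Suc q) \<le> real m * 2^K" using assms(2)
    by (metis Suc_leI of_nat_le_iff of_nat_mult of_nat_numeral of_nat_power)
  then show "real (Suc q) / (real m * 2^K) \<le> 1" using c by simp
qed

lemma int_chi:
  assumes "m > 0" "q < m * 2^K"
  shows "(LINT x|LM. chi m K q x) = 1 / (real m * 2^K)"
  unfolding chi_def cell_def
  by (subst integral_ind_Ico[OF cell_sub[OF assms]]) (simp add: diff_divide_distrib[symmetric])

lemma chi_L2: "chi m K q \<in> L2"
  unfolding chi_def cell_def by (rule L2_ind)

lemma chi_meas: "chi m K q \<in> borel_measurable LM"
  using L2D(1)[OF chi_L2] .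

lemma chi_nonneg: "chi m K q x \<ge> 0" and chi_le1: "chi m K q x \<le> 1"
  by (auto simp: chi_def indicator_def)

lemma chi_sq: "chi m K q x * chi m K q x = chi m K q x"
  by (auto simp: chi_def indicator_def)

lemma inner_chi_same:
  assumes "m > 0" "q < m * 2^K"
  shows "l2_inner (chi m K q) (chi m K q') = (if q = q' then 1 / (real m * 2^K) else 0)"
  unfolding l2_inner_def chi_mult_same[OF assms(1)] using int_chi[OF assms] by auto


definition ebas :: "nat \<Rightarrow> (nat \<Rightarrow> nat \<Rightarrow> real) \<Rightarrow> nat \<Rightarrow> real \<Rightarrow> real" where
  "ebas m u j x = (\<Sum>i<m. (sqrt (real m) * u j i) * chi m 0 i x)"

definition haar :: "nat \<Rightarrow> nat \<Rightarrow> nat \<Rightarrow> real \<Rightarrow> real" where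
  "haar m k q x = sqrt (real m * 2^k) * (chi m (Suc k) (2*q) x - chi m (Suc k) (Suc (2*q)) x)"

definition lev :: "nat \<Rightarrow> nat \<Rightarrow> nat" where
  "lev m j = (LEAST k. j < m * 2^(Suc k))"

definition bas :: "nat \<Rightarrow> (nat \<Rightarrow> nat \<Rightarrow> real) \<Rightarrow> nat \<Rightarrow> real \<Rightarrow> real" where
  "bas m u j = (if j < m then ebas m u j else haar m (lev m j) (j - m * 2^(lev m j)))"

lemma lev_props:
  assumes "m > 0" "m \<le> j"
  shows "m * 2^(lev m j) \<le> j" "j < m * 2^(Suc (lev m j))"
proof -
  have ex: "j < m * 2^(Suc j)"
  proof -
    have "j < 2^j" by (rule less_exp)
    also have "\<dots> \<le> 2^Suc j" by simp
    also have "\<dots> \<le> m * 2^Suc j" using assms(1) by simp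
    finally show ?thesis .
  qed
  show "j < m * 2^(Suc (lev m j))" unfolding lev_def by (rule LeastI[of _ j]) (rule ex)
  show "m * 2^(lev m j) \<le> j"
  proof (cases "lev m j")
    case 0
    then show ?thesis using assms by simp
  next
    case (Suc k)
    have "\<not> j < m * 2^(Suc k)"
    proof
      assume "j < m * 2^(Suc k)"
      then have "lev m j \<le> k" unfolding lev_def by (rule Least_le)
      then show False using Suc by simp
    qed
    then show ?thesis using Suc by simp
  qed
qed

lemma lev_eq:
  assumes "m > 0" "q < m * 2^k"
  shows "lev m (m * 2^k + q) = k"
  unfolding lev_def
proof (rule Least_equality)
  show "m * 2^k + q < m * 2^Suc k" using assms by simp
  fix k' assume k': "m * 2^k + q < m * 2^Suc k'"
  show "k \<le> k'"
  proof (rule ccontr)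
    assume "\<not> k \<le> k'"
    then have "Suc k' \<le> k" by simp
    then have "(2::nat)^Suc k' \<le> 2^k" by (intro power_increasing) auto
    then have "m * 2^Suc k' \<le> m * 2^k" by (rule mult_le_mono2)
    then show False using k' by linarith
  qed
qed

lemma bas_haar:
  assumes "m > 0" "q < m * 2^k"
  shows "bas m u (m * 2^k + q) = haar m k q"
proof -
  have "\<not> m * 2^k + q < m" using assms by (simp add: not_less trans_le_add1)
  then show ?thesis unfolding bas_def using lev_eq[OF assms] by simp
qed

lemma bas_decode:
  assumes "m > 0" "m \<le> j"
  obtains k q where "j = m * 2^k + q" "q < m * 2^k" "bas m u j = haar m k q"
proof -
  define k where "k = lev m j"
  define q where "q = j - m * 2^k"
  have j: "j = m * 2^k + q" using lev_props[OF assms] by (simp add: k_def q_def)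
  have q: "q < m * 2^k" using lev_props[OF assms] by (simp add: k_def q_def)
  show ?thesis using that[OF j q] bas_haar[OF assms(1) q, of u] j by simp
qed

lemma sqrt_cancel: "(m::nat) > 0 \<Longrightarrow> sqrt (real m) * a * (sqrt (real m) * b / real m) = a * b"
proof -
  assume m: "m > 0"
  have "sqrt (real m) * a * (sqrt (real m) * b / real m) = (sqrt (real m) * sqrt (real m)) * (a * b) / real m"
    by (simp only: mult_ac times_divide_eq_right)
  also have "\<dots> = a * b" using m by simp
  finally show ?thesis .
qed

lemma haar_L2: "haar m k q \<in> L2"
  unfolding haar_def[abs_def] by (intro L2_scale L2_diff chi_L2)

lemma ebas_L2: "ebas m u j \<in> L2"
  unfolding ebas_def[abs_def] by (intro L2_sum_scale chi_L2) auto

lemma bas_L2: "bas m u j \<in> L2"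
  unfolding bas_def using haar_L2 ebas_L2 by auto

lemma div_lemma: "(2*q) div 2^(Suc d) = q div 2^d" "(Suc (2*q)) div 2^(Suc d) = q div (2::nat)^d"
proof -
  show "(2*q) div 2^(Suc d) = q div 2^d" by (simp add: div_mult2_eq)
  have "(Suc (2*q)) div 2^(Suc d) = (Suc (2*q)) div 2 div 2^d"
    by (simp add: div_mult2_eq mult.commute)
  then show "(Suc (2*q)) div 2^(Suc d) = q div (2::nat)^d" by simp
qed

lemma inner_haar_left:
  assumes "g \<in> L2"
  shows "l2_inner (haar m k q) g = sqrt (real m * 2^k) * (l2_inner (chi m (Suc k) (2*q)) g - l2_inner (chi m (Suc k) (Suc (2*q))) g)"
  unfolding haar_def[abs_def]
  by (simp add: l2_inner_scale_left l2_inner_diff_left[OF chi_L2 chi_L2 assms])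

lemma inner_haar_right:
  assumes "g \<in> L2"
  shows "l2_inner g (haar m k q) = sqrt (real m * 2^k) * (l2_inner g (chi m (Suc k) (2*q)) - l2_inner g (chi m (Suc k) (Suc (2*q))))"
  using inner_haar_left[OF assms] by (simp add: l2_inner_comm)

lemma chi_orth_haar:
  assumes m: "m > 0" and Kk: "K \<le> k" and q: "q < m * 2^k"
  shows "l2_inner (chi m K r) (haar m k q) = 0"
proof -
  define d where "d = k - K"
  have kK: "Suc k - K = Suc d" using Kk by (simp add: d_def)
  have q1: "2*q < m * 2^Suc k" "Suc (2*q) < m * 2^Suc k" using q by simp_all
  have KSk: "K \<le> Suc k" using Kk by simp
  have p1: "(\<lambda>x. chi m K r x * chi m (Suc k) (2*q) x) = (\<lambda>x. if r = q div 2^d then chi m (Suc k) (2*q) x else 0)"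
    by (rule ext) (simp only: chi_mult_nest[OF m KSk] kK div_lemma)
  have p2: "(\<lambda>x. chi m K r x * chi m (Suc k) (Suc (2*q)) x) = (\<lambda>x. if r = q div 2^d then chi m (Suc k) (Suc (2*q)) x else 0)"
    by (rule ext) (simp only: chi_mult_nest[OF m KSk] kK div_lemma)
  have i1: "l2_inner (chi m K r) (chi m (Suc k) (2*q)) = (if r = q div 2^d then 1 / (real m * 2^Suc k) else 0)"
    unfolding l2_inner_def p1 using int_chi[OF m q1(1)] by auto
  have i2: "l2_inner (chi m K r) (chi m (Suc k) (Suc (2*q))) = (if r = q div 2^d then 1 / (real m * 2^Suc k) else 0)"
    unfolding l2_inner_def p2 using int_chi[OF m q1(2)] by auto
  show ?thesis unfolding inner_haar_right[OF chi_L2] i1 i2 by simp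
qed

lemma haar_norm:
  assumes m: "m > 0" and q: "q < m * 2^k"
  shows "l2_inner (haar m k q) (haar m k q) = 1"
proof -
  have q1: "2*q < m * 2^Suc k" "Suc (2*q) < m * 2^Suc k" using q by simp_all
  have a: "l2_inner (chi m (Suc k) a) (chi m (Suc k) b) = (if a = b then 1 / (real m * 2^Suc k) else 0)"
    if "a < m * 2^Suc k" for a b using inner_chi_same[OF m that] .
  have "l2_inner (haar m k q) (haar m k q)
      = sqrt (real m * 2^k) * sqrt (real m * 2^k) * (2 / (real m * 2^Suc k))"
    unfolding inner_haar_left[OF haar_L2] inner_haar_right[OF chi_L2] a[OF q1(1)] a[OF q1(2)]
    by (simp add: algebra_simps)
  also have "\<dots> = 1" using m by (simp add: real_sqrt_mult[symmetric])
  finally show ?thesis .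
qed

lemma haar_orth_same:
  assumes m: "m > 0" and "q \<noteq> q'"
  shows "l2_inner (haar m k q) (haar m k q') = 0"
proof -
  have "haar m k q x * haar m k q' x = 0" for x
  proof -
    have z: "chi m (Suc k) a x * chi m (Suc k) b x = 0" if "a \<noteq> b" for a b
      using chi_mult_same[OF m, of "Suc k" a x b] that by simp
    have d: "2*q \<noteq> 2*q'" "2*q \<noteq> Suc (2*q')" "Suc (2*q) \<noteq> 2*q'" "Suc (2*q) \<noteq> Suc (2*q')"
      using assms(2) by presburger+
    define s where "s = sqrt (real m * 2^k)"
    have h1: "haar m k q x = s * (chi m (Suc k) (2*q) x - chi m (Suc k) (Suc (2*q)) x)"
      by (simp add: haar_def s_def)
    have h2: "haar m k q' x = s * (chi m (Suc k) (2*q') x - chi m (Suc k) (Suc (2*q')) x)"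
      by (simp add: haar_def s_def)
    have "haar m k q x * haar m k q' x = s * s * (chi m (Suc k) (2*q) x * chi m (Suc k) (2*q') x
       - chi m (Suc k) (2*q) x * chi m (Suc k) (Suc (2*q')) x - chi m (Suc k) (Suc (2*q)) x * chi m (Suc k) (2*q') x
       + chi m (Suc k) (Suc (2*q)) x * chi m (Suc k) (Suc (2*q')) x)"
      unfolding h1 h2 by (simp add: algebra_simps)
    then show ?thesis using z[OF d(1)] z[OF d(2)] z[OF d(3)] z[OF d(4)] by simp
  qed
  then have "(\<lambda>x. haar m k q x * haar m k q' x) = (\<lambda>x. 0)" by (rule ext)
  then show ?thesis by (simp add: l2_inner_def)
qed

lemma haar_orth_lt:
  assumes m: "m > 0" and "k < k'" and q': "q' < m * 2^k'"
  shows "l2_inner (haar m k q) (haar m k' q') = 0"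
proof -
  have "Suc k \<le> k'" using assms by simp
  then show ?thesis unfolding inner_haar_left[OF haar_L2] using chi_orth_haar[OF m _ q'] by simp
qed

lemma ebas_orth_haar:
  assumes m: "m > 0" and q: "q < m * 2^k"
  shows "l2_inner (ebas m u j) (haar m k q) = 0"
proof -
  have "l2_inner (ebas m u j) (haar m k q) = (\<Sum>i<m. (sqrt (real m) * u j i) * l2_inner (chi m 0 i) (haar m k q))"
    unfolding ebas_def[abs_def] by (rule l2_inner_sum_scale_left) (auto intro: chi_L2 haar_L2)
  also have "\<dots> = 0" using chi_orth_haar[OF m _ q] by simp
  finally show ?thesis .
qed

lemma ebas_orth:
  assumes m: "m > 0" and u: "orthon m {..<m} u" and j: "j < m" and j': "j' < m"
  shows "l2_inner (ebas m u j) (ebas m u j') = (if j = j' then 1 else 0)"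
proof -
  have "l2_inner (ebas m u j) (ebas m u j') = (\<Sum>i<m. (sqrt (real m) * u j i) * l2_inner (chi m 0 i) (ebas m u j'))"
    unfolding ebas_def[of m u j] by (rule l2_inner_sum_scale_left) (auto intro: chi_L2 ebas_L2)
  also have "\<dots> = (\<Sum>i<m. (sqrt (real m) * u j i) * (sqrt (real m) * u j' i / real m))"
  proof (intro sum.cong refl)
    fix i assume i: "i \<in> {..<m}"
    have "l2_inner (chi m 0 i) (ebas m u j') = (\<Sum>i'<m. (sqrt (real m) * u j' i') * l2_inner (chi m 0 i) (chi m 0 i'))"
      unfolding ebas_def[of m u j'] by (rule l2_inner_sum_scale_right) (auto intro: chi_L2)
    also have "\<dots> = (\<Sum>i'<m. if i' = i then sqrt (real m) * u j' i / real m else 0)"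
      using i inner_chi_same[OF m, of i 0] by (intro sum.cong) auto
    also have "\<dots> = sqrt (real m) * u j' i / real m" using i by simp
    finally show "(sqrt (real m) * u j i) * l2_inner (chi m 0 i) (ebas m u j') =
      (sqrt (real m) * u j i) * (sqrt (real m) * u j' i / real m)" by simp
  qed
  also have "\<dots> = (\<Sum>i<m. u j i * u j' i)"
    using sqrt_cancel[OF m] by simp
  also have "\<dots> = (if j = j' then 1 else 0)" using u j j' by (simp add: orthon_def dotn_def)
  finally show ?thesis .
qed

lemma bas_orthseq:
  assumes m: "m > 0" and u: "orthon m {..<m} u"
  shows "orthseq (bas m u)"
  unfolding orthseq_def
proof (intro conjI allI)
  fix j show "bas m u j \<in> L2" by (rule bas_L2)
next
  fix j j'
  show "l2_inner (bas m u j) (bas m u j') = (if j = j' then 1 else 0)"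
  proof (cases "j < m")
    case jm: True
    show ?thesis
    proof (cases "j' < m")
      case True
      then show ?thesis using jm ebas_orth[OF m u jm True] by (simp add: bas_def)
    next
      case False
      obtain k q where kq: "j' = m * 2^k + q" "q < m * 2^k" "bas m u j' = haar m k q"
        using bas_decode[OF m, of j' u] False by auto
      show ?thesis using jm False ebas_orth_haar[OF m kq(2)] kq(3) by (auto simp: bas_def)
    qed
  next
    case jm: False
    obtain k q where kq: "j = m * 2^k + q" "q < m * 2^k" "bas m u j = haar m k q"
      using bas_decode[OF m, of j u] jm by auto
    show ?thesis
    proof (cases "j' < m")
      case True
      then show ?thesis using jm ebas_orth_haar[OF m kq(2)] kq(3)
        by (auto simp: bas_def l2_inner_comm)
    next
      case False
      obtain k' q' where kq': "j' = m * 2^k' + q'" "q' < m * 2^k'" "bas m u j' = haar m k' q'"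
        using bas_decode[OF m, of j' u] False by auto
      have jlt: "j < m * 2^Suc k" "j' < m * 2^Suc k'" using kq kq' by simp_all
      have jge: "m * 2^k \<le> j" "m * 2^k' \<le> j'" using kq kq' by simp_all
      have mono: "m * 2^Suc a \<le> m * 2^b" if "a < b" for a b
      proof -
        have "(2::nat)^Suc a \<le> 2^b" using that by (intro power_increasing) auto
        then show ?thesis by (rule mult_le_mono2)
      qed
      consider "k < k'" | "k' < k" | "k = k'" "q = q'" | "k = k'" "q \<noteq> q'" by linarith
      then show ?thesis
      proof cases
        case 1
        then have "j \<noteq> j'" using jlt jge mono[OF 1] by linarith
        then show ?thesis using haar_orth_lt[OF m 1 kq'(2)] kq kq' by auto
      next
        case 2
        then have "j \<noteq> j'" using jlt jge mono[OF 2] by linarith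
        then show ?thesis using haar_orth_lt[OF m 2 kq(2)] kq kq' by (auto simp: l2_inner_comm)
      next
        case 3
        then show ?thesis using haar_norm[OF m kq(2)] kq kq' by auto
      next
        case 4
        then show ?thesis using haar_orth_same[OF m 4(2)] kq kq' by auto
      qed
    qed
  qed
qed


lemma span_chi:
  assumes m: "m > 0" and u: "orthon m {..<m} u"
  shows "q < m * 2^K \<Longrightarrow> spanN (bas m u) (m * 2^K) (chi m K q)"
proof (induction K arbitrary: q)
  case 0
  then have q: "q < m" by simp
  have eq: "chi m 0 q x = (\<Sum>j<m. (u j q / sqrt (real m)) * bas m u j x)" for x
  proof -
    have "(\<Sum>j<m. (u j q / sqrt (real m)) * bas m u j x) = (\<Sum>j<m. \<Sum>i<m. (u j q * u j i) * chi m 0 i x)"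
    proof (intro sum.cong refl)
      fix j assume j: "j \<in> {..<m}"
      have "(u j q / sqrt (real m)) * bas m u j x = (\<Sum>i<m. (u j q / sqrt (real m)) * ((sqrt (real m) * u j i) * chi m 0 i x))"
        using j by (simp add: bas_def ebas_def sum_distrib_left)
      also have "\<dots> = (\<Sum>i<m. (u j q * u j i) * chi m 0 i x)"
        using m by (intro sum.cong refl) simp
      finally show "(u j q / sqrt (real m)) * bas m u j x = (\<Sum>i<m. (u j q * u j i) * chi m 0 i x)" .
    qed
    also have "\<dots> = (\<Sum>i<m. \<Sum>j<m. (u j q * u j i) * chi m 0 i x)" by (rule sum.swap)
    also have "\<dots> = (\<Sum>i<m. (\<Sum>j<m. u j q * u j i) * chi m 0 i x)" by (simp add: sum_distrib_right)
    also have "\<dots> = (\<Sum>i<m. (if q = i then chi m 0 q x else 0))"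
      using orthon_complete[OF u q] by (intro sum.cong refl) auto
    also have "\<dots> = chi m 0 q x" using q by simp
    finally show ?thesis by simp
  qed
  show ?case unfolding spanN_def using eq by (intro exI[of _ "\<lambda>j. u j q / sqrt (real m)"]) simp
next
  case (Suc K r)
  define q where "q = r div 2"
  have q: "q < m * 2^K" using Suc.prems by (simp add: q_def less_mult_imp_div_less)
  have r: "r = 2*q \<or> r = Suc (2*q)" unfolding q_def by presburger
  have s1: "spanN (bas m u) (m * 2^Suc K) (chi m K q)"
    by (rule spanN_mono[OF Suc.IH[OF q]]) simp
  have idx: "m * 2^K + q < m * 2^Suc K" using q by simp
  have s2: "spanN (bas m u) (m * 2^Suc K) (haar m K q)"
    using spanN_basis[OF idx, of "bas m u"] bas_haar[OF m q, of u] by simp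
  define sc where "sc = sqrt (real m * 2^K)"
  have spos: "sc > 0" using m by (simp add: sc_def)
  have hk: "haar m K q x = sc * (chi m (Suc K) (2*q) x - chi m (Suc K) (Suc (2*q)) x)" for x
    by (simp add: haar_def sc_def)
  have e1: "chi m (Suc K) (2*q) x = (1/2) * chi m K q x + (1 / (2 * sc)) * haar m K q x" for x
    unfolding hk chi_split[OF m, of K q x] using spos by (simp add: field_simps)
  have e2: "chi m (Suc K) (Suc (2*q)) x = (1/2) * chi m K q x + (-(1 / (2 * sc))) * haar m K q x" for x
    unfolding hk chi_split[OF m, of K q x] using spos by (simp add: field_simps)
  have a1: "spanN (bas m u) (m * 2^Suc K) (chi m (Suc K) (2*q))"
    by (rule spanN_cong[OF spanN_add[OF spanN_scale[OF s1] spanN_scale[OF s2]]]) (rule e1[symmetric])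
  have a2: "spanN (bas m u) (m * 2^Suc K) (chi m (Suc K) (Suc (2*q)))"
    by (rule spanN_cong[OF spanN_add[OF spanN_scale[OF s1] spanN_scale[OF s2]]]) (rule e2[symmetric])
  show ?case using r a1 a2 by auto
qed

lemma span_step:
  assumes m: "m > 0" and u: "orthon m {..<m} u"
  shows "spanN (bas m u) (m * 2^K) (\<lambda>x. \<Sum>q<m * 2^K. w q * chi m K q x)"
  by (intro spanN_sum spanN_scale span_chi[OF m u]) auto


lemma cell_sub01:
  assumes "m > 0" "q < m * 2^K" shows "cell m K q \<subseteq> {0..<1}"
proof
  fix x assume "x \<in> cell m K q"
  then have "real q / (real m * 2^K) \<le> x" "x < real (Suc q) / (real m * 2^K)" by (auto simp: cell_def)
  then show "x \<in> {0..<1}" using order_trans[OF cell_sub(1)[OF assms]] less_le_trans[OF _ cell_sub(3)[OF assms]]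
    by auto
qed

lemma cell_sets: assumes "m > 0" "q < m * 2^K" shows "cell m K q \<in> sets LM"
proof -
  have "cell m K q \<subseteq> {0..1}" using cell_sub01[OF assms] by auto
  then show ?thesis unfolding cell_def by (auto simp: sets_restrict_space_iff)
qed

lemma cell_child:
  assumes m: "m > 0" and x: "x \<in> cell m K q"
  shows "x \<in> cell m (Suc K) (2*q) \<or> x \<in> cell m (Suc K) (Suc (2*q))"
  using chi_split[OF m, of K q x] x by (auto simp: chi_def indicator_def split: if_splits)

lemma cell_parent:
  assumes m: "m > 0" and x: "x \<in> cell m (Suc K) r"
  shows "x \<in> cell m K (r div 2)"
  using cell_nest[OF m _ x, of K] by simp

lemma cell_small:
  assumes m: "m > 0" and x: "x \<in> cell m K q" and y: "y \<in> cell m K q"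
  shows "\<bar>y - x\<bar> < 1 / (real m * 2^K)"
proof -
  have c: "real m * 2^K > 0" using m by simp
  have "\<bar>y * (real m * 2^K) - x * (real m * 2^K)\<bar> < 1"
    using mem_cell[OF m, of x K q] mem_cell[OF m, of y K q] x y by (simp add: floor_eq_iff) linarith
  then have "\<bar>y - x\<bar> * (real m * 2^K) < 1" by (simp add: left_diff_distrib[symmetric] abs_mult c)
  then show ?thesis using c by (simp add: field_simps)
qed

lemma cell_of_point:
  assumes m: "m > 0" and x: "0 \<le> x" "x < 1"
  shows "\<exists>q. q < m * 2^K \<and> x \<in> cell m K q"
proof -
  have c: "real m * 2^K > 0" using m by simp
  define q where "q = nat \<lfloor>x * (real m * 2^K)\<rfloor>"
  have fl: "\<lfloor>x * (real m * 2^K)\<rfloor> = int q" unfolding q_def using x c by simp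
  have "x * (real m * 2^K) < 1 * (real m * 2^K)" using x c by (intro mult_strict_right_mono) auto
  then have "real q < real m * 2^K" using fl by linarith
  then have "q < m * 2^K" by (metis of_nat_less_iff of_nat_mult of_nat_numeral of_nat_power)
  then show ?thesis using fl mem_cell[OF m] by blast
qed

lemma approx_set:
  assumes m: "m > 0" and u: "orthon m {..<m} u" and S: "S \<in> sets LM"
  shows "approx (bas m u) (indicator S)"
  unfolding approx_def
proof (intro allI impI)
  fix e :: real assume e: "e > 0"
  have S01: "S \<subseteq> {0..1}" and Sl: "S \<in> sets lebesgue" using S by (auto simp: sets_restrict_space_iff)
  obtain T where T: "open T" "S \<subseteq> T" "(T - S) \<in> lmeasurable" "emeasure lebesgue (T - S) < ennreal (e/4)"
    using sets_lebesgue_outer_open[OF Sl, of "e/4"] e by auto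
  have mTS: "measure lebesgue (T - S) < e/4"
    using T(4) emeasure_eq_measure2[OF T(3)] e by (simp add: ennreal_less_iff)
  define T0 where "T0 = T \<inter> {0..<1}"
  have T0s: "T0 \<in> sets LM" unfolding T0_def using T(1) by (auto simp: sets_restrict_space_iff borel_open)
  define A where "A K = {q. q < m * 2^K \<and> cell m K q \<subseteq> T}" for K
  define U where "U K = (\<Union>q\<in>A K. cell m K q)" for K
  have finA: "finite (A K)" for K unfolding A_def by simp
  have Us: "U K \<in> sets LM" for K
    unfolding U_def using finA cell_sets[OF m] by (intro sets.finite_UN) (auto simp: A_def)
  have UT0: "U K \<subseteq> T0" for K
    unfolding U_def T0_def A_def using cell_sub01[OF m] by blast
  have inc: "incseq U"
  proof (rule incseq_SucI, rule subsetI)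
    fix K x assume "x \<in> U K"
    then obtain q where q: "q \<in> A K" "x \<in> cell m K q" unfolding U_def by blast
    have sub: "cell m (Suc K) r \<subseteq> cell m K q" if "r div 2 = q" for r
      using cell_parent[OF m] that by blast
    have idx: "2*q < m * 2^Suc K" "Suc (2*q) < m * 2^Suc K" using q(1) by (auto simp: A_def)
    have "2*q \<in> A (Suc K)" "Suc (2*q) \<in> A (Suc K)"
      using idx sub[of "2*q"] sub[of "Suc (2*q)"] q(1) by (auto simp: A_def)
    then show "x \<in> U (Suc K)" using cell_child[OF m q(2)] unfolding U_def by blast
  qed
  have unionU: "(\<Union>K. U K) = T0"
  proof
    show "(\<Union>K. U K) \<subseteq> T0" using UT0 by blast
    show "T0 \<subseteq> (\<Union>K. U K)"
    proof
      fix x assume x: "x \<in> T0"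
      then have xT: "x \<in> T" and x01: "0 \<le> x" "x < 1" by (auto simp: T0_def)
      obtain r where r: "r > 0" "ball x r \<subseteq> T" using openE[OF T(1) xT] by blast
      obtain K where K: "(1/2::real)^K < r" using real_arch_pow_inv[OF r(1), of "1/2"] by auto
      obtain q where q: "q < m * 2^K" "x \<in> cell m K q" using cell_of_point[OF m x01] by blast
      have "1 / (real m * 2^K) \<le> (1/2)^K"
      proof -
        have "1 / (real m * 2^K) \<le> 1 / (1 * 2^K)" using m by (intro divide_left_mono) auto
        then show ?thesis by (simp add: power_one_over)
      qed
      then have "cell m K q \<subseteq> ball x r"
        using cell_small[OF m q(2)] K by (force simp: dist_real_def abs_minus_commute)
      then have "q \<in> A K" using q r(2) by (auto simp: A_def)
      then show "x \<in> (\<Union>K. U K)" using q(2) unfolding U_def by blast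
    qed
  qed
  have "(\<lambda>K. measure LM (U K)) \<longlonglongrightarrow> measure LM (\<Union>K. U K)"
    by (rule Lim_measure_incseq) (use Us inc finite_measure.emeasure_finite[OF fmLM] in auto)
  then have lim: "(\<lambda>K. measure LM (U K)) \<longlonglongrightarrow> measure LM T0" using unionU by simp
  obtain K where K0: "\<forall>n\<ge>K. norm (measure LM (U n) - measure LM T0) < e/4"
    using LIMSEQ_D[OF lim, of "e/4"] e by auto
  then have "\<bar>measure LM (U K) - measure LM T0\<bar> < e/4" by auto
  then have K: "measure LM T0 - measure LM (U K) < e/4" by linarith
  define g where "g x = (\<Sum>q\<in>A K. chi m K q x)" for x
  have gsp: "spanN (bas m u) (m * 2^K) g"
    unfolding g_def[abs_def] using span_chi[OF m u] finA by (intro spanN_sum) (auto simp: A_def)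
  have disj: "disjoint_family_on (cell m K) (A K)"
    unfolding disjoint_family_on_def using cell_disj[OF m] by blast
  have gU: "g x = indicator (U K) x" for x
    unfolding g_def U_def indicator_UN_disjoint[OF finA disj] chi_def ..
  define E1 where "E1 = (T - S) \<inter> {0..1}"
  define E2 where "E2 = T0 - U K"
  have E1s: "E1 \<in> sets LM" unfolding E1_def using fmeasurableD[OF T(3)]
    by (auto simp: sets_restrict_space_iff)
  have E2s: "E2 \<in> sets LM" unfolding E2_def using T0s Us by auto
  have E3s: "{1::real} \<in> sets LM" by (auto simp: sets_restrict_space_iff)
  have intI: "integrable LM (indicat_real E)" if "E \<in> sets LM" for E
    using that finite_measure.emeasure_finite[OF fmLM] by (intro integrable_real_indicator) (auto simp: top.not_eq_extremum)
  have pw: "(indicator S x - g x) * (indicator S x - g x) \<le> indicator E1 x + indicator E2 x + indicator {1::real} x"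
    if "x \<in> space LM" for x
  proof -
    have x01: "0 \<le> x" "x \<le> 1" using that by auto
    show ?thesis
    proof (cases "x \<in> S \<longleftrightarrow> x \<in> U K")
      case True
      then show ?thesis by (auto simp: gU indicator_def)
    next
      case False
      then consider "x \<in> S" "x \<notin> U K" | "x \<notin> S" "x \<in> U K" by blast
      then show ?thesis
      proof cases
        case 1
        then have "x \<in> T" using T(2) by blast
        then have "x \<in> E2 \<or> x = 1" using 1 x01 by (auto simp: E2_def T0_def)
        then show ?thesis using 1 by (auto simp: gU indicator_def)
      next
        case 2
        then have "x \<in> E1" using UT0 x01 by (auto simp: E1_def T0_def)
        then show ?thesis using 2 by (auto simp: gU indicator_def)
      qed
    qed
  qed
  have gL2: "g \<in> L2" using spanN_L2[OF bas_orthseq[OF m u] gsp] .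
  have SL2: "indicator S \<in> L2"
    by (rule L2_bounded[where B=1]) (auto simp: borel_measurable_indicator S indicator_def)
  have "Dst (indicator S) g \<le> (LINT x|LM. indicator E1 x + indicator E2 x + indicator {1::real} x)"
    unfolding Dst_def l2_inner_def
    by (rule integral_mono) (use pw intI[OF E1s] intI[OF E2s] intI[OF E3s] L2_mult_int[OF L2_diff[OF SL2 gL2] L2_diff[OF SL2 gL2]] in auto)
  also have "\<dots> = measure LM E1 + measure LM E2 + measure LM {1}"
  proof -
    have "E1 \<inter> {0..1} = E1" by (auto simp: E1_def)
    moreover have "E2 \<inter> {0..1} = E2" using sets.sets_into_space[OF E2s] by auto
    ultimately show ?thesis
      using intI[OF E1s] intI[OF E2s] intI[OF E3s] E1s E2s E3s by (simp add: integral_indicator)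
  qed
  also have "measure LM E1 \<le> measure lebesgue (T - S)"
  proof -
    have "measure LM E1 = measure lebesgue E1"
      unfolding E1_def by (subst measure_restrict_space) (auto simp: fmeasurableD[OF T(3)])
    also have "\<dots> \<le> measure lebesgue (T - S)"
      unfolding E1_def by (rule measure_mono_fmeasurable) (use T(3) fmeasurableD[OF T(3)] in auto)
    finally show ?thesis .
  qed
  also have "measure LM E2 = measure LM T0 - measure LM (U K)"
    unfolding E2_def by (rule finite_measure.finite_measure_Diff[OF fmLM T0s Us UT0])
  also have "measure LM {1::real} = 0"
    by (subst measure_restrict_space) auto
  finally have "Dst (indicator S) g < e" using mTS K e by linarith
  then show "\<exists>N g. spanN (bas m u) N g \<and> Dst (indicator S) g < e" using gsp by blast
qed


lemma measure_LM_space: "measure LM (space LM) = 1"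
  by (subst measure_restrict_space) auto

lemma approx_bounded:
  assumes m: "m > 0" and u: "orthon m {..<m} u"
    and f: "f \<in> borel_measurable LM" and B: "\<And>x. \<bar>f x\<bar> \<le> B"
  shows "approx (bas m u) f"
proof (rule approx_closure[OF bas_orthseq[OF m u]])
  show fL2: "f \<in> L2" by (rule L2_bounded[OF f B])
  fix e :: real assume e: "e > 0"
  define d where "d = min 1 (e/2)"
  have d: "d > 0" "d \<le> 1" "d \<le> e/2" using e by (auto simp: d_def)
  have dd: "d * d < e"
  proof -
    have "d * d \<le> d * 1" using d by (intro mult_left_mono) auto
    then show ?thesis using d e by linarith
  qed
  have B0: "B \<ge> 0" using B[of 0] by linarith
  define N where "N = nat \<lceil>B / d\<rceil> + 1"
  define I where "I = {- int N..int N}"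
  define A where "A k = f -` {real_of_int k * d ..< (real_of_int k + 1) * d} \<inter> space LM" for k
  have As: "A k \<in> sets LM" for k unfolding A_def by (rule measurable_sets[OF f]) simp
  define g where "g x = (\<Sum>k\<in>I. (real_of_int k * d) * indicator (A k) x)" for x
  have indL2: "indicator (A k) \<in> L2" for k
    by (rule L2_bounded[where B=1]) (auto simp: borel_measurable_indicator As indicator_def)
  have gL2: "g \<in> L2" unfolding g_def[abs_def] by (intro L2_sum_scale indL2) (simp add: I_def)
  have gap: "approx (bas m u) g"
    unfolding g_def[abs_def]
    by (rule approx_sum[OF bas_orthseq[OF m u]]) (auto simp: I_def intro!: L2_scale indL2 approx_scale approx_set[OF m u As])
  have memA: "x \<in> A k \<longleftrightarrow> \<lfloor>f x / d\<rfloor> = k" if "x \<in> space LM" for x k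
  proof -
    have "x \<in> A k \<longleftrightarrow> real_of_int k * d \<le> f x \<and> f x < (real_of_int k + 1) * d"
      using that by (auto simp: A_def)
    also have "\<dots> \<longleftrightarrow> real_of_int k \<le> f x / d \<and> f x / d < real_of_int k + 1"
      using d(1) by (simp add: field_simps)
    also have "\<dots> \<longleftrightarrow> \<lfloor>f x / d\<rfloor> = k" by (simp add: floor_eq_iff)
    finally show ?thesis .
  qed
  have gx: "g x = real_of_int \<lfloor>f x / d\<rfloor> * d" if x: "x \<in> space LM" for x
  proof -
    define k0 where "k0 = \<lfloor>f x / d\<rfloor>"
    have "0 \<le> B / d" using B0 d(1) by simp
    then have c0: "0 \<le> \<lceil>B / d\<rceil>" by simp
    have NN: "int N = \<lceil>B / d\<rceil> + 1" unfolding N_def using c0 by simp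
    have cB: "B / d \<le> real_of_int \<lceil>B / d\<rceil>" by (rule le_of_int_ceiling)
    have "f x / d \<le> B / d" using B[of x] d(1) by (intro divide_right_mono) auto
    then have "real_of_int k0 \<le> real_of_int \<lceil>B / d\<rceil>" unfolding k0_def using cB by linarith
    then have up: "k0 \<le> int N" unfolding NN by linarith
    have "- B / d \<le> f x / d" using B[of x] d(1) by (intro divide_right_mono) auto
    then have "- real_of_int \<lceil>B / d\<rceil> - 1 < real_of_int k0" unfolding k0_def using cB by linarith
    then have lo: "- int N \<le> k0" unfolding NN by linarith
    have k0I: "k0 \<in> I" using up lo by (simp add: I_def)
    have "g x = (\<Sum>k\<in>I. if k = k0 then real_of_int k0 * d else 0)"
      unfolding g_def using memA[OF x] by (intro sum.cong refl) (auto simp: indicator_def k0_def)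
    also have "\<dots> = real_of_int k0 * d" using k0I by (simp add: I_def)
    finally show ?thesis by (simp add: k0_def)
  qed
  have pw: "(f x - g x) * (f x - g x) \<le> d * d" if x: "x \<in> space LM" for x
  proof -
    have "real_of_int \<lfloor>f x / d\<rfloor> \<le> f x / d" "f x / d < real_of_int \<lfloor>f x / d\<rfloor> + 1" by linarith+
    have a: "real_of_int \<lfloor>f x / d\<rfloor> * d \<le> f x / d * d"
      by (rule mult_right_mono) (use d(1) in auto)
    have b: "f x / d * d < (real_of_int \<lfloor>f x / d\<rfloor> + 1) * d"
      by (rule mult_strict_right_mono) (use d(1) in auto)
    have "f x / d * d = f x" using d(1) by simp
    then have "real_of_int \<lfloor>f x / d\<rfloor> * d \<le> f x" "f x < (real_of_int \<lfloor>f x / d\<rfloor> + 1) * d"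
      using a b by auto
    then have "0 \<le> f x - g x" "f x - g x \<le> d" using gx[OF x] by (simp_all add: algebra_simps)
    then show ?thesis by (intro mult_mono) auto
  qed
  have "Dst f g \<le> (LINT x|LM. d * d)"
    unfolding Dst_def l2_inner_def
    by (rule integral_mono) (use pw L2_mult_int[OF L2_diff[OF fL2 gL2] L2_diff[OF fL2 gL2]] finite_measure.integrable_const[OF fmLM] in auto)
  also have "\<dots> = d * d" using measure_LM_space by simp
  finally have "Dst f g < e" using dd by linarith
  then show "\<exists>g. g \<in> L2 \<and> approx (bas m u) g \<and> Dst f g < e" using gL2 gap by blast
qed

lemma approx_L2:
  assumes m: "m > 0" and u: "orthon m {..<m} u" and f: "f \<in> L2"
  shows "approx (bas m u) f"
proof (rule approx_closure[OF bas_orthseq[OF m u] f])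
  fix e :: real assume e: "e > 0"
  define t where "t n x = max (- real n) (min (real n) (f x))" for n x
  have fm: "f \<in> borel_measurable LM" using L2D(1)[OF f] .
  have tm: "t n \<in> borel_measurable LM" for n
    unfolding t_def[abs_def] using fm by (intro borel_measurable_max borel_measurable_min) auto
  have tb: "\<bar>t n x\<bar> \<le> real n" for n x by (auto simp: t_def)
  have tL2: "t n \<in> L2" for n by (rule L2_bounded[OF tm tb])
  have tap: "approx (bas m u) (t n)" for n by (rule approx_bounded[OF m u tm tb])
  define s where "s n x = (f x - t n x) * (f x - t n x)" for n x
  have "(\<lambda>n. integral\<^sup>L LM (s n)) \<longlonglongrightarrow> integral\<^sup>L LM (\<lambda>x. 0)"
  proof (rule integral_dominated_convergence[where w="\<lambda>x. (f x)\<^sup>2"])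
    show "(\<lambda>x. 0::real) \<in> borel_measurable LM" by simp
    show "s n \<in> borel_measurable LM" for n unfolding s_def[abs_def] using fm tm by auto
    show "integrable LM (\<lambda>x. (f x)\<^sup>2)" using L2D(2)[OF f] .
    show "AE x in LM. (\<lambda>n. s n x) \<longlonglongrightarrow> 0"
    proof (rule AE_I2)
      fix x
      have "eventually (\<lambda>n. s n x = 0) sequentially"
        unfolding eventually_sequentially
      proof (intro exI allI impI)
        fix n assume "nat \<lceil>\<bar>f x\<bar>\<rceil> \<le> n"
        then have "\<bar>f x\<bar> \<le> real n" by linarith
        then show "s n x = 0" by (auto simp: s_def t_def)
      qed
      then show "(\<lambda>n. s n x) \<longlonglongrightarrow> 0" by (rule tendsto_eventually)
    qed
    show "AE x in LM. norm (s n x) \<le> (f x)\<^sup>2" for n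
    proof (rule AE_I2)
      fix x
      have "\<bar>f x - t n x\<bar> \<le> \<bar>f x\<bar>" by (auto simp: t_def)
      then have "(f x - t n x)\<^sup>2 \<le> (f x)\<^sup>2"
        by (metis abs_le_square_iff)
      then show "norm (s n x) \<le> (f x)\<^sup>2" by (simp add: s_def power2_eq_square)
    qed
  qed
  then have "(\<lambda>n. Dst f (t n)) \<longlonglongrightarrow> 0" by (simp add: Dst_def l2_inner_def s_def[abs_def])
  then obtain n where "norm (Dst f (t n) - 0) < e" using LIMSEQ_D e by blast
  then have "Dst f (t n) < e" using Dst_nonneg by simp
  then show "\<exists>g. g \<in> L2 \<and> approx (bas m u) g \<and> Dst f g < e" using tL2 tap by blast
qed

lemma bas_complete:
  assumes m: "m > 0" and u: "orthon m {..<m} u" and f: "f \<in> L2"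
  shows "(\<lambda>N. l2_norm (\<lambda>x. f x - (\<Sum>j<N. l2_inner f (bas m u j) * bas m u j x))) \<longlonglongrightarrow> 0"
  by (rule approx_complete[OF bas_orthseq[OF m u] f approx_L2[OF m u f]])


definition stepf :: "nat \<Rightarrow> (nat \<Rightarrow> real) \<Rightarrow> real \<Rightarrow> real" where
  "stepf n a v = (\<Sum>i<n. a i * chi n 0 i v)"

definition cc :: "nat \<Rightarrow> nat \<Rightarrow> (real \<Rightarrow> real) \<Rightarrow> real" where
  "cc n k f = l2_inner (chi n 0 k) f"

lemma part_chi: "indicator (part_int n i) = chi n 0 i"
  by (simp add: part_int_def chi_def cell_def)

lemma stepf_L2: "stepf n a \<in> L2"
  unfolding stepf_def[abs_def] by (intro L2_sum_scale chi_L2) auto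

lemma stepf_meas: "stepf n a \<in> borel_measurable LM"
  using L2D(1)[OF stepf_L2] .

lemma cc_step:
  assumes n: "n > 0" and k: "k < n"
  shows "cc n k (stepf n a) = a k / real n"
proof -
  have "cc n k (stepf n a) = (\<Sum>i<n. a i * l2_inner (chi n 0 k) (chi n 0 i))"
    unfolding cc_def stepf_def[abs_def] by (rule l2_inner_sum_scale_right) (auto intro: chi_L2)
  also have "\<dots> = (\<Sum>i<n. if i = k then a k / real n else 0)"
    using inner_chi_same[OF n, of k 0] k by (intro sum.cong refl) auto
  also have "\<dots> = a k / real n" using k by simp
  finally show ?thesis .
qed

lemma inner_step_left:
  assumes f: "f \<in> L2"
  shows "l2_inner (stepf n a) f = (\<Sum>i<n. a i * cc n i f)"
  unfolding stepf_def[abs_def] cc_def by (rule l2_inner_sum_scale_left) (auto intro: chi_L2 f)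

lemma inner_step_step:
  assumes n: "n > 0"
  shows "l2_inner (stepf n a) (stepf n b) = dotn n a b / real n"
  unfolding inner_step_left[OF stepf_L2] dotn_def
  by (simp add: cc_step[OF n] sum_divide_distrib)

lemma step_norm_zero:
  assumes n: "n > 0" and z: "l2_norm (stepf n a) = 0" and i: "i < n"
  shows "a i = 0"
proof -
  have "l2_inner (stepf n a) (stepf n a) = 0" using z l2_norm_sq[of "stepf n a"] by simp
  then have "dotn n a a = 0" using inner_step_step[OF n] n by simp
  then show ?thesis using i by (simp add: dotn_zero_iff)
qed

lemma stepf_lin: "stepf n (\<lambda>i. x * a i + y * b i) v = x * stepf n a v + y * stepf n b v"
  by (simp add: stepf_def distrib_right sum.distrib sum_distrib_left mult.assoc)

lemma stepf_sum: "(\<Sum>j\<in>J. c j * stepf n (d j) v) = stepf n (\<lambda>i. \<Sum>j\<in>J. c j * d j i) v"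
proof -
  have "(\<Sum>j\<in>J. c j * stepf n (d j) v) = (\<Sum>j\<in>J. \<Sum>i<n. c j * d j i * chi n 0 i v)"
    by (simp add: stepf_def sum_distrib_left mult.assoc)
  also have "\<dots> = (\<Sum>i<n. \<Sum>j\<in>J. c j * d j i * chi n 0 i v)" by (rule sum.swap)
  also have "\<dots> = stepf n (\<lambda>i. \<Sum>j\<in>J. c j * d j i) v"
    by (simp add: stepf_def sum_distrib_right)
  finally show ?thesis .
qed

lemma stepf_cong: "(\<And>i. i < n \<Longrightarrow> a i = b i) \<Longrightarrow> stepf n a = stepf n b"
  by (auto simp: stepf_def[abs_def])

lemma op_formula:
  assumes f: "f \<in> L2"
  shows "integral_op (induced_graphon n B) f = stepf n (\<lambda>i. \<Sum>j<n. B i j * cc n j f)"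
proof
  fix v
  have "integral_op (induced_graphon n B) f v
      = (LINT u|LM. (\<Sum>i<n. \<Sum>j<n. (B i j * chi n 0 i v) * (chi n 0 j u * f u)))"
    unfolding integral_op_def induced_graphon_def part_chi
    by (intro Bochner_Integration.integral_cong refl) (simp add: sum_distrib_right sum_distrib_left mult_ac)
  also have "\<dots> = (\<Sum>i<n. \<Sum>j<n. (B i j * chi n 0 i v) * (LINT u|LM. chi n 0 j u * f u))"
  proof -
    have int: "integrable LM (\<lambda>u. chi n 0 j u * f u)" for j by (rule L2_mult_int[OF chi_L2 f])
    show ?thesis
      by (subst Bochner_Integration.integral_sum) (use int in \<open>auto intro!: sum.cong Bochner_Integration.integral_sum simp: integral_mult_right_zero\<close>)
  qed
  also have "\<dots> = stepf n (\<lambda>i. \<Sum>j<n. B i j * cc n j f) v"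
    by (simp add: stepf_def cc_def l2_inner_def sum_distrib_right sum_distrib_left mult_ac)
  finally show "integral_op (induced_graphon n B) f v = stepf n (\<lambda>i. \<Sum>j<n. B i j * cc n j f) v" .
qed


lemma ebas_stepf: "ebas m u j = stepf m (\<lambda>i. sqrt (real m) * u j i)"
  by (simp add: ebas_def[abs_def] stepf_def[abs_def])

lemma l2_norm_zero_if: "(\<And>x. f x = 0) \<Longrightarrow> l2_norm f = 0"
proof -
  assume "\<And>x. f x = 0"
  then have "f = (\<lambda>x. 0)" by auto
  then show ?thesis by (simp add: l2_norm_zero_fun)
qed

lemma op_eigenbasis_exists:
  assumes sym: "\<forall>i<n. \<forall>j<n. D i j = D j i"
  shows "\<exists>lam phi. op_orth_eigenbasis (integral_op (induced_graphon n (\<lambda>i j. real n * D i j))) lam phi"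
proof (cases "n > 0")
  case n: True
  obtain lamM psi where E: "mat_orth_eigenbasis n D lamM psi" using spectral[OF sym] by blast
  have orth: "orthon n {..<n} psi" using E by (simp add: mat_orth_eigenbasis_def orthon_def dotn_def)
  have eig: "\<And>j i. j < n \<Longrightarrow> i < n \<Longrightarrow> (\<Sum>k<n. D i k * psi j k) = lamM j * psi j i"
    using E by (simp add: mat_orth_eigenbasis_def)
  define T where "T = integral_op (induced_graphon n (\<lambda>i j. real n * D i j))"
  define lam where "lam j = (if j < n then lamM j else 0)" for j
  have Tphi: "T (bas n psi j) x = lam j * bas n psi j x" for j x
  proof (cases "j < n")
    case j: True
    have b: "bas n psi j = stepf n (\<lambda>i. sqrt (real n) * psi j i)"
      using j by (simp add: bas_def ebas_stepf)
    have "T (bas n psi j) = stepf n (\<lambda>i. \<Sum>k<n. real n * D i k * cc n k (bas n psi j))"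
      unfolding T_def by (rule op_formula[OF bas_L2])
    also have "\<dots> = stepf n (\<lambda>i. lamM j * (sqrt (real n) * psi j i))"
    proof (rule stepf_cong)
      fix i assume i: "i < n"
      have "(\<Sum>k<n. real n * D i k * cc n k (bas n psi j)) = (\<Sum>k<n. sqrt (real n) * (D i k * psi j k))"
        unfolding b using n by (intro sum.cong refl) (simp add: cc_step[OF n])
      also have "\<dots> = sqrt (real n) * (lamM j * psi j i)"
        by (simp add: sum_distrib_left[symmetric] eig[OF j i])
      finally show "(\<Sum>k<n. real n * D i k * cc n k (bas n psi j)) = lamM j * (sqrt (real n) * psi j i)"
        by simp
    qed
    finally show ?thesis using j b
      by (simp add: lam_def stepf_def sum_distrib_left mult.assoc)
  next
    case j: False
    then obtain k q where kq: "j = n * 2^k + q" "q < n * 2^k" "bas n psi j = haar n k q"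
      using bas_decode[OF n, of j psi] by auto
    have "T (bas n psi j) = stepf n (\<lambda>i. \<Sum>k'<n. real n * D i k' * cc n k' (bas n psi j))"
      unfolding T_def by (rule op_formula[OF bas_L2])
    also have "\<dots> = stepf n (\<lambda>i. 0)"
      unfolding kq(3) cc_def using chi_orth_haar[OF n _ kq(2)] by simp
    finally show ?thesis using j by (simp add: lam_def stepf_def)
  qed
  have os: "orthseq (bas n psi)" by (rule bas_orthseq[OF n orth])
  have "op_orth_eigenbasis T lam (bas n psi)"
    unfolding op_orth_eigenbasis_def
  proof (intro conjI allI ballI)
    show "bas n psi j \<in> L2" for j by (rule bas_L2)
    show "l2_inner (bas n psi j) (bas n psi k) = (if j = k then 1 else 0)" for j k
      using os by (simp add: orthseq_def)
    show "(\<lambda>N. l2_norm (\<lambda>x. f x - (\<Sum>j<N. l2_inner f (bas n psi j) * bas n psi j x))) \<longlonglongrightarrow> 0"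
      if "f \<in> L2" for f by (rule bas_complete[OF n orth that])
    show "l2_norm (\<lambda>x. T (bas n psi j) x - lam j * bas n psi j x) = 0" for j
      by (rule l2_norm_zero_if) (simp add: Tphi)
  qed
  then show ?thesis unfolding T_def by blast
next
  case False
  then have n0: "n = 0" by simp
  define u where "u = (\<lambda>(j::nat) (i::nat). (1::real))"
  have orth: "orthon 1 {..<1} u" by (simp add: orthon_def dotn_def u_def)
  have one: "(1::nat) > 0" by simp
  have T0: "integral_op (induced_graphon n (\<lambda>i j. real n * D i j)) g x = 0" for g x
    by (simp add: n0 integral_op_def induced_graphon_def)
  have os: "orthseq (bas 1 u)" by (rule bas_orthseq[OF one orth])
  have "op_orth_eigenbasis (integral_op (induced_graphon n (\<lambda>i j. real n * D i j))) (\<lambda>j. 0) (bas 1 u)"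
    unfolding op_orth_eigenbasis_def
  proof (intro conjI allI ballI)
    show "bas 1 u j \<in> L2" for j by (rule bas_L2)
    show "l2_inner (bas 1 u j) (bas 1 u k) = (if j = k then 1 else 0)" for j k
      using os by (simp add: orthseq_def)
    show "(\<lambda>N. l2_norm (\<lambda>x. f x - (\<Sum>j<N. l2_inner f (bas 1 u j) * bas 1 u j x))) \<longlonglongrightarrow> 0"
      if "f \<in> L2" for f by (rule bas_complete[OF one orth that])
    show "l2_norm (\<lambda>x. integral_op (induced_graphon n (\<lambda>i j. real n * D i j)) (bas 1 u j) x - 0 * bas 1 u j x) = 0" for j
      by (rule l2_norm_zero_if) (simp add: T0)
  qed
  then show ?thesis by blast
qed


lemma cc_cong_AE:
  assumes "f \<in> borel_measurable LM" "f' \<in> borel_measurable LM" "AE x in LM. f x = f' x"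
  shows "cc n k f = cc n k f'"
  unfolding cc_def using l2_inner_cong_AE[OF assms(1,2) chi_meas assms(3)] by (simp add: l2_inner_comm)

lemma eventually_const_lim:
  assumes "X \<longlonglongrightarrow> 0" "\<forall>N\<ge>N0. X N = (L::real)"
  shows "L = 0"
proof -
  have "eventually (\<lambda>N. X N = L) sequentially" using assms(2) eventually_sequentially by blast
  then have "(\<lambda>N. L) \<longlonglongrightarrow> 0" using Lim_transform_eventually[OF assms(1)] by simp
  then show ?thesis by (simp add: LIMSEQ_const_iff)
qed

lemma main_pos:
  assumes n: "n > 0" and sym: "\<forall>i<n. \<forall>j<n. D i j = D j i" and h0: "h 0 = 0" and f: "f \<in> L2"
    and E: "mat_orth_eigenbasis n D lam psi"
    and Op: "op_orth_eigenbasis (integral_op (induced_graphon n (\<lambda>i j. real n * D i j))) mu phi"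
  shows "\<exists>N0. \<forall>N\<ge>N0. AE x in LM. (\<Sum>j<N. h (mu j) * l2_inner f (phi j) * phi j x)
      = integral_op (induced_graphon n (\<lambda>i j. real n * (\<Sum>l<n. h (lam l) * psi l i * psi l j))) f x"
proof -
  have symm: "symm n D" using sym by (simp add: symm_def)
  have orthM: "orthon n {..<n} psi" using E by (simp add: mat_orth_eigenbasis_def orthon_def dotn_def)
  have eigM: "\<And>l i. l < n \<Longrightarrow> i < n \<Longrightarrow> mulv n D (psi l) i = lam l * psi l i"
    using E by (simp add: mat_orth_eigenbasis_def mulv_def)
  have complM: "\<And>i k. i < n \<Longrightarrow> k < n \<Longrightarrow> (\<Sum>l<n. psi l i * psi l k) = (if i = k then 1 else 0)"
    using orthon_complete[OF orthM] by blast
  have phiL2: "\<And>j. phi j \<in> L2" and phiON: "\<And>j k. l2_inner (phi j) (phi k) = (if j = k then 1 else 0)"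
    and phiC: "\<And>g. g \<in> L2 \<Longrightarrow> (\<lambda>N. l2_norm (\<lambda>x. g x - (\<Sum>j<N. l2_inner g (phi j) * phi j x))) \<longlonglongrightarrow> 0"
    and phiE: "\<And>j. l2_norm (\<lambda>x. integral_op (induced_graphon n (\<lambda>i j. real n * D i j)) (phi j) x - mu j * phi j x) = 0"
    using Op unfolding op_orth_eigenbasis_def by auto
  define T where "T = integral_op (induced_graphon n (\<lambda>i j. real n * D i j))"
  define d where "d j = (\<lambda>i. real n * cc n i (phi j))" for j
  have phim: "phi j \<in> borel_measurable LM" for j using L2D(1)[OF phiL2] .
  have Tphi: "T (phi j) = stepf n (mulv n D (d j))" for j
  proof -
    have "T (phi j) = stepf n (\<lambda>i. \<Sum>k<n. real n * D i k * cc n k (phi j))"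
      unfolding T_def by (rule op_formula[OF phiL2])
    also have "\<dots> = stepf n (mulv n D (d j))"
      by (rule stepf_cong) (simp add: mulv_def d_def mult_ac)
    finally show ?thesis .
  qed
  have AEj: "AE x in LM. T (phi j) x = mu j * phi j x" for j
  proof -
    have "(\<lambda>x. T (phi j) x - mu j * phi j x) \<in> L2"
      unfolding Tphi by (intro L2_diff L2_scale stepf_L2 phiL2)
    from l2_norm_zero_AE[OF this] phiE[of j] show ?thesis unfolding T_def by simp
  qed
  have eigd: "mulv n D (d j) i = mu j * d j i" if i: "i < n" for j i
  proof -
    have "cc n i (T (phi j)) = cc n i (\<lambda>x. mu j * phi j x)"
      by (rule cc_cong_AE[OF _ _ AEj]) (use phim in \<open>auto simp: Tphi stepf_meas\<close>)
    moreover have "cc n i (T (phi j)) = mulv n D (d j) i / real n"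
      unfolding Tphi by (rule cc_step[OF n i])
    moreover have "cc n i (\<lambda>x. mu j * phi j x) = mu j * d j i / real n"
      using n by (simp add: cc_def l2_inner_comm[of "chi n 0 i"] l2_inner_scale_left d_def)
    ultimately show ?thesis using n by (simp add: field_simps)
  qed
  define J where "J = {j. mu j \<noteq> 0}"
  have Tstep: "T (phi j) = (\<lambda>x. mu j * stepf n (d j) x)" for j
  proof -
    have "T (phi j) = stepf n (\<lambda>i. mu j * d j i)"
      unfolding Tphi by (rule stepf_cong) (simp add: eigd)
    also have "\<dots> = (\<lambda>x. mu j * stepf n (d j) x)"
      by (rule ext) (simp add: stepf_def sum_distrib_left mult.assoc)
    finally show ?thesis .
  qed
  have AEstep: "AE x in LM. phi j x = stepf n (d j) x" if "j \<in> J" for j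
  proof -
    have mj: "mu j \<noteq> 0" using that by (simp add: J_def)
    show ?thesis using AEj[of j]
    proof eventually_elim
      case (elim x)
      then show ?case using mj by (simp add: Tstep)
    qed
  qed
  have inner_phi: "l2_inner g (phi j) = l2_inner g (stepf n (d j))" if "j \<in> J" "g \<in> L2" for g j
    using l2_inner_cong_AE[OF phim stepf_meas L2D(1)[OF that(2)] AEstep[OF that(1)]]
    by (simp add: l2_inner_comm)
  have dON: "dotn n (d j) (d j') / real n = (if j = j' then 1 else 0)" if "j \<in> J" "j' \<in> J" for j j'
  proof -
    have "l2_inner (phi j) (phi j') = l2_inner (phi j) (stepf n (d j'))"
      by (rule inner_phi[OF that(2) phiL2])
    also have "\<dots> = l2_inner (stepf n (d j')) (phi j)" by (rule l2_inner_comm)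
    also have "\<dots> = l2_inner (stepf n (d j')) (stepf n (d j))"
      by (rule inner_phi[OF that(1) stepf_L2])
    also have "\<dots> = l2_inner (stepf n (d j)) (stepf n (d j'))" by (rule l2_inner_comm)
    finally have "l2_inner (phi j) (phi j') = l2_inner (stepf n (d j)) (stepf n (d j'))" .
    then show ?thesis using phiON inner_step_step[OF n] by simp
  qed
  have finJ: "finite J"
  proof (rule orthon_finite)
    have key: "dotn n (\<lambda>i. (1 / sqrt (real n)) * d j i) (\<lambda>i. (1 / sqrt (real n)) * d j' i)
       = dotn n (d j) (d j') / real n" for j j'
    proof -
      have "dotn n (\<lambda>i. (1 / sqrt (real n)) * d j i) (\<lambda>i. (1 / sqrt (real n)) * d j' i)
         = (1 / sqrt (real n)) * ((1 / sqrt (real n)) * dotn n (d j) (d j'))"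
        by (simp only: dotn_scale_left dotn_scale_right)
      also have "\<dots> = dotn n (d j) (d j') / (sqrt (real n))\<^sup>2"
        by (simp add: power2_eq_square)
      also have "\<dots> = dotn n (d j) (d j') / real n" by simp
      finally show ?thesis .
    qed
    show "orthon n J (\<lambda>j i. (1 / sqrt (real n)) * d j i)"
      unfolding orthon_def using dON by (simp only: key) simp
  qed
  obtain N0 where N0: "J \<subseteq> {..<N0}" using finJ finite_nat_iff_bounded by blast
  have orthd: "(mu j - lam l) * dotn n (d j) (psi l) = 0" if l: "l < n" for j l
  proof -
    have "mu j * dotn n (d j) (psi l) = dotn n (mulv n D (d j)) (psi l)"
      by (subst dotn_cong[of n "mulv n D (d j)" "\<lambda>i. mu j * d j i" "psi l" "psi l"]) (auto simp: eigd dotn_scale_left)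
    also have "\<dots> = dotn n (d j) (mulv n D (psi l))" by (rule mulv_sym[OF symm])
    also have "\<dots> = lam l * dotn n (d j) (psi l)"
      by (subst dotn_cong[of n "d j" "d j" "mulv n D (psi l)" "\<lambda>i. lam l * psi l i"]) (auto simp: eigM l dotn_scale_right)
    finally show ?thesis by (simp add: algebra_simps)
  qed
  have complD: "real n * psi l i = (\<Sum>j\<in>J. dotn n (d j) (psi l) * d j i)"
    if l: "l < n" and ll: "lam l \<noteq> 0" and i: "i < n" for l i
  proof -
    define fl where "fl = stepf n (psi l)"
    have flL2: "fl \<in> L2" unfolding fl_def by (rule stepf_L2)
    define a where "a j = l2_inner fl (phi j)" for j
    have a_eq: "a j = dotn n (d j) (psi l) / real n" for j
    proof -
      have "a j = (\<Sum>i<n. psi l i * cc n i (phi j))"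
        unfolding a_def fl_def by (rule inner_step_left[OF phiL2])
      also have "\<dots> = dotn n (d j) (psi l) / real n"
        using n by (simp add: dotn_def d_def sum_divide_distrib mult_ac)
      finally show ?thesis .
    qed
    have a0: "a j = 0" if "j \<notin> J" for j
    proof -
      have "mu j = 0" using that by (simp add: J_def)
      then have "lam l * dotn n (d j) (psi l) = 0" using orthd[OF l, of j] by simp
      then show ?thesis using ll by (simp add: a_eq)
    qed
    have sumJ: "(\<Sum>j<N. a j * phi j x) = (\<Sum>j\<in>J. a j * phi j x)" if "N \<ge> N0" for N x
      using N0 that a0 by (intro sum.mono_neutral_right) auto
    define L where "L = l2_norm (\<lambda>x. fl x - (\<Sum>j\<in>J. a j * phi j x))"
    have "L = 0"
    proof (rule eventually_const_lim[OF phiC[OF flL2]])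
      show "\<forall>N\<ge>N0. l2_norm (\<lambda>x. fl x - (\<Sum>j<N. l2_inner fl (phi j) * phi j x)) = L"
        using sumJ by (simp add: L_def a_def[symmetric])
    qed
    define w where "w i = psi l i - (\<Sum>j\<in>J. a j * d j i)" for i
    have "AE x in LM. fl x - (\<Sum>j\<in>J. a j * phi j x) = stepf n w x"
    proof -
      have "AE x in LM. \<forall>j\<in>J. phi j x = stepf n (d j) x"
        using AEstep finJ by (simp add: AE_finite_all)
      then show ?thesis
      proof eventually_elim
        case (elim x)
        then have "(\<Sum>j\<in>J. a j * phi j x) = (\<Sum>j\<in>J. a j * stepf n (d j) x)" by simp
        also have "\<dots> = stepf n (\<lambda>i. \<Sum>j\<in>J. a j * d j i) x" by (rule stepf_sum)
        finally show ?case
          by (simp add: fl_def w_def stepf_def sum_subtractf left_diff_distrib)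
      qed
    qed
    then have "l2_norm (stepf n w) = 0"
      using \<open>L = 0\<close> unfolding L_def
      by (subst (asm) l2_norm_cong_AE[where f'="stepf n w"]) (auto intro!: borel_measurable_diff borel_measurable_sum borel_measurable_times simp: fl_def stepf_meas phim)
    then have "w i = 0" by (rule step_norm_zero[OF n _ i])
    then have "psi l i = (\<Sum>j\<in>J. dotn n (d j) (psi l) / real n * d j i)" by (simp add: w_def a_eq)
    then show ?thesis using n by (simp add: sum_divide_distrib[symmetric] field_simps)
  qed
  have expand: "dotn n v c = (\<Sum>l<n. dotn n (psi l) c * dotn n v (psi l))" for v c
  proof -
    have "(\<Sum>l<n. dotn n (psi l) c * dotn n v (psi l)) = (\<Sum>l<n. \<Sum>k<n. \<Sum>i<n. (c k * v i) * (psi l k * psi l i))"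
      by (simp add: dotn_def sum_product mult_ac)
    also have "\<dots> = (\<Sum>k<n. \<Sum>l<n. \<Sum>i<n. (c k * v i) * (psi l k * psi l i))" by (rule sum.swap)
    also have "\<dots> = (\<Sum>k<n. \<Sum>i<n. \<Sum>l<n. (c k * v i) * (psi l k * psi l i))"
      by (intro sum.cong refl sum.swap)
    also have "\<dots> = (\<Sum>k<n. \<Sum>i<n. (c k * v i) * (if k = i then 1 else 0))"
      by (intro sum.cong refl) (simp add: sum_distrib_left[symmetric] complM)
    also have "\<dots> = (\<Sum>k<n. c k * v k)" by (simp add: if_distrib cong: if_cong)
    finally show ?thesis by (simp add: dotn_def mult.commute)
  qed
  have h2: "(\<Sum>j\<in>J. h (mu j) * dotn n (d j) (psi l) * d j i) = real n * h (lam l) * psi l i"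
    if l: "l < n" and i: "i < n" for l i
  proof -
    have "(\<Sum>j\<in>J. h (mu j) * dotn n (d j) (psi l) * d j i) = (\<Sum>j\<in>J. h (lam l) * (dotn n (d j) (psi l) * d j i))"
    proof (intro sum.cong refl)
      fix j
      show "h (mu j) * dotn n (d j) (psi l) * d j i = h (lam l) * (dotn n (d j) (psi l) * d j i)"
      proof (cases "dotn n (d j) (psi l) = 0")
        case False
        then have "mu j = lam l" using orthd[OF l, of j] by simp
        then show ?thesis by simp
      qed simp
    qed
    also have "\<dots> = h (lam l) * (\<Sum>j\<in>J. dotn n (d j) (psi l) * d j i)" by (simp add: sum_distrib_left)
    also have "\<dots> = real n * h (lam l) * psi l i"
    proof (cases "lam l = 0")
      case True
      then show ?thesis using h0 by simp
    next
      case False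
      then show ?thesis using complD[OF l False i] by simp
    qed
    finally show ?thesis .
  qed
  define Hm where "Hm i k = (\<Sum>l<n. h (lam l) * psi l i * psi l k)" for i k
  define c where "c k = cc n k f" for k
  have h3: "(\<Sum>j\<in>J. h (mu j) * dotn n (d j) c * d j i) = real n * (\<Sum>k<n. Hm i k * c k)" if i: "i < n" for i
  proof -
    have "(\<Sum>j\<in>J. h (mu j) * dotn n (d j) c * d j i)
        = (\<Sum>j\<in>J. \<Sum>l<n. dotn n (psi l) c * (h (mu j) * dotn n (d j) (psi l) * d j i))"
      by (subst expand) (simp add: sum_distrib_left sum_distrib_right mult_ac)
    also have "\<dots> = (\<Sum>l<n. \<Sum>j\<in>J. dotn n (psi l) c * (h (mu j) * dotn n (d j) (psi l) * d j i))"
      by (rule sum.swap)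
    also have "\<dots> = (\<Sum>l<n. dotn n (psi l) c * (real n * h (lam l) * psi l i))"
      by (intro sum.cong refl) (simp add: sum_distrib_left[symmetric] h2 i)
    also have "\<dots> = real n * (\<Sum>k<n. Hm i k * c k)"
      by (simp add: Hm_def dotn_def sum_distrib_left sum_distrib_right mult_ac)
        (rule sum.swap)
    finally show ?thesis .
  qed
  have T2: "integral_op (induced_graphon n (\<lambda>i j. real n * Hm i j)) f = stepf n (\<lambda>i. real n * (\<Sum>k<n. Hm i k * c k))"
    by (subst op_formula[OF f]) (simp add: c_def sum_distrib_left mult_ac)
  have innf: "l2_inner f (phi j) = dotn n (d j) c" if "j \<in> J" for j
  proof -
    have "l2_inner f (phi j) = l2_inner f (stepf n (d j))" by (rule inner_phi[OF that f])
    also have "\<dots> = l2_inner (stepf n (d j)) f" by (rule l2_inner_comm)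
    also have "\<dots> = (\<Sum>i<n. d j i * cc n i f)" by (rule inner_step_left[OF f])
    also have "\<dots> = dotn n (d j) c" by (simp add: dotn_def c_def)
    finally show ?thesis .
  qed
  have sumN: "(\<Sum>j<N. h (mu j) * l2_inner f (phi j) * phi j x) = (\<Sum>j\<in>J. h (mu j) * l2_inner f (phi j) * phi j x)"
    if "N \<ge> N0" for N x
    using N0 that h0 by (intro sum.mono_neutral_right) (auto simp: J_def)
  have AEfin: "AE x in LM. (\<Sum>j\<in>J. h (mu j) * l2_inner f (phi j) * phi j x)
      = integral_op (induced_graphon n (\<lambda>i j. real n * Hm i j)) f x"
  proof -
    have "AE x in LM. \<forall>j\<in>J. phi j x = stepf n (d j) x"
      using AEstep finJ by (simp add: AE_finite_all)
    then show ?thesis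
    proof eventually_elim
      case (elim x)
      then have "(\<Sum>j\<in>J. h (mu j) * l2_inner f (phi j) * phi j x)
          = (\<Sum>j\<in>J. (h (mu j) * dotn n (d j) c) * stepf n (d j) x)"
        by (intro sum.cong refl) (simp add: innf)
      also have "\<dots> = stepf n (\<lambda>i. \<Sum>j\<in>J. (h (mu j) * dotn n (d j) c) * d j i) x"
        by (rule stepf_sum)
      also have "\<dots> = stepf n (\<lambda>i. real n * (\<Sum>k<n. Hm i k * c k)) x"
        using h3 by (subst stepf_cong[of n _ "\<lambda>i. real n * (\<Sum>k<n. Hm i k * c k)"]) auto
      finally show ?case unfolding T2 .
    qed
  qed
  show ?thesis
    unfolding Hm_def[symmetric]
  proof (intro exI allI impI)
    fix N assume "N0 \<le> N"
    then show "AE x in LM. (\<Sum>j<N. h (mu j) * l2_inner f (phi j) * phi j x)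
        = integral_op (induced_graphon n (\<lambda>i j. real n * Hm i j)) f x"
      using AEfin sumN by simp
  qed
qed


lemma mat_fun_char:
  assumes sym: "\<forall>i<n. \<forall>j<n. D i j = D j i"
  shows "\<exists>lam psi. mat_orth_eigenbasis n D lam psi \<and>
           (\<forall>h. mat_fun h n D = (\<lambda>i k. \<Sum>j<n. h (lam j) * psi j i * psi j k))"
proof -
  define p where "p = (SOME (lam, phi). mat_orth_eigenbasis n D lam phi)"
  have "\<exists>x. (\<lambda>(lam, phi). mat_orth_eigenbasis n D lam phi) x"
    using spectral[OF sym] by auto
  then have "(\<lambda>(lam, phi). mat_orth_eigenbasis n D lam phi) p"
    unfolding p_def by (rule someI_ex)
  then have P: "mat_orth_eigenbasis n D (fst p) (snd p)" by (cases p) simp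
  have "mat_fun h n D = (\<lambda>i k. \<Sum>j<n. h (fst p j) * snd p j i * snd p j k)" for h
    unfolding mat_fun_def p_def[symmetric] Let_def by (cases p) simp
  then show ?thesis using P by blast
qed

lemma op_fun_char:
  assumes ex: "\<exists>lam phi. op_orth_eigenbasis T lam phi"
  shows "\<exists>mu phi. op_orth_eigenbasis T mu phi \<and>
     (\<forall>h psi. op_fun h T psi = (SOME g. g \<in> L2 \<and>
           (\<lambda>N. l2_norm (\<lambda>x. g x - (\<Sum>j<N. h (mu j) * l2_inner psi (phi j) * phi j x))) \<longlonglongrightarrow> 0))"
proof -
  define p where "p = (SOME (lam, phi). op_orth_eigenbasis T lam phi)"
  have "\<exists>x. (\<lambda>(lam, phi). op_orth_eigenbasis T lam phi) x"
    using ex by auto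
  then have "(\<lambda>(lam, phi). op_orth_eigenbasis T lam phi) p"
    unfolding p_def by (rule someI_ex)
  then have P: "op_orth_eigenbasis T (fst p) (snd p)" by (cases p) simp
  have "op_fun h T psi = (SOME g. g \<in> L2 \<and>
           (\<lambda>N. l2_norm (\<lambda>x. g x - (\<Sum>j<N. h (fst p j) * l2_inner psi (snd p j) * snd p j x))) \<longlonglongrightarrow> 0)" for h psi
    unfolding op_fun_def p_def[symmetric] Let_def by (cases p) simp
  then show ?thesis using P by blast
qed

lemma final_step:
  assumes G: "G \<in> L2" and S: "\<And>N. S N \<in> L2"
    and ev: "\<forall>N\<ge>N0. AE x in LM. S N x = G x"
  shows "l2_norm (\<lambda>x. (SOME g. g \<in> L2 \<and> (\<lambda>N. l2_norm (\<lambda>x. g x - S N x)) \<longlonglongrightarrow> 0) x - G x) = 0"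
proof -
  have z: "l2_norm (\<lambda>x. g x - S N x) = l2_norm (\<lambda>x. g x - G x)" if "g \<in> L2" "N \<ge> N0" for g N
  proof (rule l2_norm_cong_AE)
    show "(\<lambda>x. g x - S N x) \<in> borel_measurable LM" using L2D(1)[OF L2_diff[OF that(1) S]] .
    show "(\<lambda>x. g x - G x) \<in> borel_measurable LM" using L2D(1)[OF L2_diff[OF that(1) G]] .
    show "AE x in LM. g x - S N x = g x - G x" using ev that(2) by (auto elim!: AE_mp intro!: AE_I2)
  qed
  have "G \<in> L2 \<and> (\<lambda>N. l2_norm (\<lambda>x. G x - S N x)) \<longlonglongrightarrow> 0"
  proof
    show "G \<in> L2" by fact
    have "eventually (\<lambda>N. 0 = l2_norm (\<lambda>x. G x - S N x)) sequentially"
      unfolding eventually_sequentially using z[OF G] by (auto simp: l2_norm_zero_fun)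
    then show "(\<lambda>N. l2_norm (\<lambda>x. G x - S N x)) \<longlonglongrightarrow> 0"
      by (rule Lim_transform_eventually[OF tendsto_const])
  qed
  then have "\<exists>g. g \<in> L2 \<and> (\<lambda>N. l2_norm (\<lambda>x. g x - S N x)) \<longlonglongrightarrow> 0" by blast
  from someI_ex[OF this] obtain g where g: "g = (SOME g. g \<in> L2 \<and> (\<lambda>N. l2_norm (\<lambda>x. g x - S N x)) \<longlonglongrightarrow> 0)"
    "g \<in> L2" "(\<lambda>N. l2_norm (\<lambda>x. g x - S N x)) \<longlonglongrightarrow> 0" by blast
  have "l2_norm (\<lambda>x. g x - G x) = 0"
    by (rule eventually_const_lim[OF g(3), of N0]) (use z[OF g(2)] in auto)
  then show ?thesis using g(1) by simp
qed

theorem proposition4p4: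
  fixes n :: nat and Delta :: "nat \<Rightarrow> nat \<Rightarrow> real" and h :: "real \<Rightarrow> real"
  assumes sym: "\<forall>i<n. \<forall>j<n. Delta i j = Delta j i"
    and cont: "continuous_on UNIV h"
    and h0: "h 0 = 0"
  shows "\<forall>psi\<in>L2.
    l2_norm (\<lambda>x. op_fun h (integral_op (induced_graphon n (\<lambda>i j. real n * Delta i j))) psi x
                 - integral_op (induced_graphon n (\<lambda>i j. real n * mat_fun h n Delta i j)) psi x) = 0"
proof
  fix psi assume psi: "psi \<in> L2"
  define T where "T = integral_op (induced_graphon n (\<lambda>i j. real n * Delta i j))"
  obtain lam psiM where E: "mat_orth_eigenbasis n Delta lam psiM"
    and MF: "\<And>h. mat_fun h n Delta = (\<lambda>i k. \<Sum>j<n. h (lam j) * psiM j i * psiM j k)"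
    using mat_fun_char[OF sym] by blast
  obtain mu phi where Op: "op_orth_eigenbasis T mu phi"
    and OF: "\<And>h psi. op_fun h T psi = (SOME g. g \<in> L2 \<and>
           (\<lambda>N. l2_norm (\<lambda>x. g x - (\<Sum>j<N. h (mu j) * l2_inner psi (phi j) * phi j x))) \<longlonglongrightarrow> 0)"
    using op_fun_char[OF op_eigenbasis_exists[OF sym]] unfolding T_def by blast
  define G where "G = integral_op (induced_graphon n (\<lambda>i j. real n * mat_fun h n Delta i j)) psi"
  define S where "S N x = (\<Sum>j<N. h (mu j) * l2_inner psi (phi j) * phi j x)" for N x
  have phiL2: "\<And>j. phi j \<in> L2" using Op by (simp add: op_orth_eigenbasis_def)
  have GL2: "G \<in> L2" unfolding G_def op_formula[OF psi] by (rule stepf_L2)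
  have SL2: "S N \<in> L2" for N unfolding S_def[abs_def] by (intro L2_sum_scale phiL2) auto
  have ev: "\<exists>N0. \<forall>N\<ge>N0. AE x in LM. S N x = G x"
  proof (cases "n > 0")
    case True
    show ?thesis
      using main_pos[where n=n and D=Delta and h=h and f=psi and lam=lam and psi=psiM and mu=mu and phi=phi,
          OF True sym h0 psi E Op[unfolded T_def]]
      unfolding S_def G_def MF by simp
  next
    case False
    then have n0: "n = 0" by simp
    have mu0: "mu j = 0" for j
    proof -
      have "l2_norm (\<lambda>x. T (phi j) x - mu j * phi j x) = 0" using Op by (simp add: op_orth_eigenbasis_def)
      moreover have "T (phi j) x = 0" for x by (simp add: T_def n0 integral_op_def induced_graphon_def)
      ultimately have "l2_norm (\<lambda>x. (- mu j) * phi j x) = 0" by simp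
      then have "l2_inner (\<lambda>x. (- mu j) * phi j x) (\<lambda>x. (- mu j) * phi j x) = 0"
        using l2_norm_sq[of "\<lambda>x. (- mu j) * phi j x"] by simp
      moreover have "l2_inner (\<lambda>x. (- mu j) * phi j x) (\<lambda>x. (- mu j) * phi j x)
          = (- mu j) * l2_inner (phi j) (\<lambda>x. (- mu j) * phi j x)" by (rule l2_inner_scale_left)
      moreover have "l2_inner (phi j) (\<lambda>x. (- mu j) * phi j x) = l2_inner (\<lambda>x. (- mu j) * phi j x) (phi j)"
        by (rule l2_inner_comm)
      moreover have "l2_inner (\<lambda>x. (- mu j) * phi j x) (phi j) = (- mu j) * l2_inner (phi j) (phi j)"
        by (rule l2_inner_scale_left)
      ultimately have "(- mu j) * ((- mu j) * l2_inner (phi j) (phi j)) = 0" by simp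
      moreover have "l2_inner (phi j) (phi j) = 1" using Op by (simp add: op_orth_eigenbasis_def)
      ultimately show ?thesis by simp
    qed
    have "S N x = 0" "G x = 0" for N x
      by (simp_all add: S_def mu0 h0 G_def n0 integral_op_def induced_graphon_def)
    then show ?thesis by auto
  qed
  then obtain N0 where N0: "\<forall>N\<ge>N0. AE x in LM. S N x = G x" by blast
  have "l2_norm (\<lambda>x. (SOME g. g \<in> L2 \<and> (\<lambda>N. l2_norm (\<lambda>x. g x - S N x)) \<longlonglongrightarrow> 0) x - G x) = 0"
    by (rule final_step[OF GL2 SL2 N0])
  then show "l2_norm (\<lambda>x. op_fun h (integral_op (induced_graphon n (\<lambda>i j. real n * Delta i j))) psi x
                 - integral_op (induced_graphon n (\<lambda>i j. real n * mat_fun h n Delta i j)) psi x) = 0"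
    unfolding T_def[symmetric] OF S_def[symmetric] G_def[symmetric] by simp
qed

end
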